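(* Let $d\ge 3$ and let $\rho$ be a full-rank density matrix on $\mathbb{C}^D$ depending on parameters $\theta_1,\dots,\theta_d$; write $\rho_0=\rho$ and $\rho_j=\partial_j\rho$ ($j=1,\dots,d$). Let $S$ be the $d\times d$ matrix with $S_{j,j}=1$ for all $j$, $S_{j,j+1}=i$ for $j=1,\dots,d-1$, $S_{d,1}=i$ if $d$ is not a multiple of $4$ and $S_{d,1}=-i$ if $d$ is a multiple of $4$, and all other entries $0$; let $T=S^{-1}$. For real numbers $\mathbf z=(z_{l,k})_{0\le l\le d,\,1\le k\le d}\in\mathbb R^{d(d+1)}$ and Hermitian $D\times D$ matrices $\xi_1,\dots,\xi_d$ define $$\Gamma_j=\sum_{k=1}^d T_{k,j}\Big(\sum_{l=0}^d z_{l,k}\rho_l+i\xi_k\Big),\qquad j=1,\dots,d.$$ For a binary string $\boldsymbol\alpha\in\{0,1\}^d$ let $\bar{\boldsymbol\alpha}=\boldsymbol\alpha$ if $d$ is not a multiple of $4$, and let $\bar{\boldsymbol\alpha}$ be $\boldsymbol\alpha$ with its last bit flipped if $d$ is a multiple of $4$, and define $$g_{\boldsymbol\alpha}=-\sum_{j=1}^d z_{j,j}-\sum_{j=1}^d\frac{\delta_{0,\bar\alpha_j}\mathrm{Tr}[\Gamma_j\rho^{-1}\Gamma_j^\dagger]+\delta_{1,\bar\alpha_j}\mathrm{Tr}[\Gamma_j^\dagger\rho^{-1}\Gamma_j]}{2}.$$ Then $$C_{\mathsf H}\ \ge\ \max_{\boldsymbol\alpha\in\{0,1\}^d}\ \max_{\mathbf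 z,\xi_1,\dots,\xi_d} g_{\boldsymbol\alpha}.$$
   Context: $\mathrm{Re}(\cdot)$ and $\mathrm{Im}(\cdot)$ of a matrix are taken entrywise, and $\|\cdot\|_1$ is the trace norm. For a $d$-parameter family of density matrices $\rho$ on $\mathbb{C}^D$, the Holevo Cramér–Rao bound with identity weight matrix is $$C_{\mathsf H}=\min\Big\{\mathrm{Tr}[\mathrm{Re}Z(\mathbf X)]+\|\mathrm{Im}Z(\mathbf X)\|_1\Big\},$$ the minimum taken over tuples $\mathbf X=(X_1,\dots,X_d)$ of Hermitian $D\times D$ matrices with $\mathrm{Tr}[\rho X_j]=0$ and $\mathrm{Tr}[\partial_j\rho\,X_k]=\delta_{jk}$, where $Z_{jk}(\mathbf X)=\mathrm{Tr}[\rho X_jX_k]$. The matrix $S$ is invertible (so $T$ exists). *)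

theory Defs
  imports Complex_Main "Jordan_Normal_Form.Schur_Decomposition"
    "HOL-Library.Extended_Real"
begin

definition mtrace :: "complex mat \<Rightarrow> complex" where
  "mtrace A = (\<Sum>i<dim_row A. A $$ (i, i))"

definition hermitian_mat :: "nat \<Rightarrow> complex mat \<Rightarrow> bool" where
  "hermitian_mat n A \<longleftrightarrow> A \<in> carrier_mat n n \<and> mat_adjoint A = A"

definition psd_mat :: "nat \<Rightarrow> complex mat \<Rightarrow> bool" where
  "psd_mat n A \<longleftrightarrow> hermitian_mat n A \<and>
     (\<forall>v \<in> carrier_vec n. 0 \<le> Re (conjugate v \<bullet> (A *\<^sub>v v)))"

definition density_mat :: "nat \<Rightarrow> complex mat \<Rightarrow> bool" where
  "density_mat n A \<longleftrightarrow> psd_mat n A \<and> mtrace A = 1"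

definition minv :: "complex mat \<Rightarrow> complex mat" where
  "minv A = (SOME B. B \<in> carrier_mat (dim_row A) (dim_row A) \<and>
              A * B = 1\<^sub>m (dim_row A) \<and> B * A = 1\<^sub>m (dim_row A))"

text \<open>Trace norm = sum of the singular values, i.e. of the square roots of the
  eigenvalues (with multiplicity) of A^dagger A.\<close>
definition trace_norm :: "complex mat \<Rightarrow> real" where
  "trace_norm A = (SOME s. \<exists>es. char_poly (mat_adjoint A * A) = (\<Prod>e\<leftarrow>es. [:- e, 1:])
                            \<and> s = sum_list (map (\<lambda>e. sqrt (Re e)) es))"

definition Re_mat :: "complex mat \<Rightarrow> complex mat" where
  "Re_mat A = map_mat (\<lambda>x. complex_of_real (Re x)) A"
definition Im_mat :: "complex mat \<Rightarrow> complex mat" where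
  "Im_mat A = map_mat (\<lambda>x. complex_of_real (Im x)) A"

text \<open>Parameters and estimator indices are 1-based (1..d); JNF matrix entries are
  0-based, so entry (j,k) of a d x d matrix is stored at (j-1,k-1).
  rho0 = rho, drho j = partial_j rho.\<close>

definition holevo_feasible ::
  "nat \<Rightarrow> nat \<Rightarrow> complex mat \<Rightarrow> (nat \<Rightarrow> complex mat) \<Rightarrow> (nat \<Rightarrow> complex mat) \<Rightarrow> bool" where
  "holevo_feasible D d rho0 drho X \<longleftrightarrow>
     (\<forall>j\<in>{1..d}. hermitian_mat D (X j) \<and> mtrace (rho0 * X j) = 0 \<and>
        (\<forall>k\<in>{1..d}. mtrace (drho j * X k) = (if j = k then 1 else 0)))"

definition Z_mat :: "nat \<Rightarrow> complex mat \<Rightarrow> (nat \<Rightarrow> complex mat) \<Rightarrow> complex mat" where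
  "Z_mat d rho0 X = mat d d (\<lambda>(a, b). mtrace (rho0 * X (a + 1) * X (b + 1)))"

definition holevo_objective :: "nat \<Rightarrow> complex mat \<Rightarrow> (nat \<Rightarrow> complex mat) \<Rightarrow> real" where
  "holevo_objective d rho0 X =
     Re (mtrace (Re_mat (Z_mat d rho0 X))) + trace_norm (Im_mat (Z_mat d rho0 X))"

text \<open>Holevo Cramer-Rao bound with identity weight (infimum, in the extended reals).\<close>
definition holevo_CR ::
  "nat \<Rightarrow> nat \<Rightarrow> complex mat \<Rightarrow> (nat \<Rightarrow> complex mat) \<Rightarrow> ereal" where
  "holevo_CR D d rho0 drho =
     (INF X \<in> {X. holevo_feasible D d rho0 drho X}. ereal (holevo_objective d rho0 X))"

definition S_mat :: "nat \<Rightarrow> complex mat" where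
  "S_mat d = mat d d (\<lambda>(a, b).
      if a = b then 1
      else if b = a + 1 then \<i>
      else if a = d - 1 \<and> b = 0 then (if 4 dvd d then - \<i> else \<i>)
      else 0)"

definition T_mat :: "nat \<Rightarrow> complex mat" where
  "T_mat d = minv (S_mat d)"

definition rho_l :: "complex mat \<Rightarrow> (nat \<Rightarrow> complex mat) \<Rightarrow> nat \<Rightarrow> complex mat" where
  "rho_l rho0 drho l = (if l = 0 then rho0 else drho l)"

definition Gamma ::
  "nat \<Rightarrow> nat \<Rightarrow> complex mat \<Rightarrow> (nat \<Rightarrow> complex mat) \<Rightarrow> (nat \<Rightarrow> nat \<Rightarrow> real)
     \<Rightarrow> (nat \<Rightarrow> complex mat) \<Rightarrow> nat \<Rightarrow> complex mat" where
  "Gamma D d rho0 drho z xi j = mat D D (\<lambda>(a, b).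
     \<Sum>k\<in>{1..d}. T_mat d $$ (k - 1, j - 1) *
        ((\<Sum>l\<in>{0..d}. complex_of_real (z l k) * rho_l rho0 drho l $$ (a, b))
         + \<i> * xi k $$ (a, b)))"

text \<open>Binary strings alpha in {0,1}^d as nat => bool (True = 1), used on 1..d.\<close>
definition alpha_bar :: "nat \<Rightarrow> (nat \<Rightarrow> bool) \<Rightarrow> nat \<Rightarrow> bool" where
  "alpha_bar d \<alpha> j = (if 4 dvd d \<and> j = d then \<not> \<alpha> j else \<alpha> j)"

definition g_alpha ::
  "nat \<Rightarrow> nat \<Rightarrow> complex mat \<Rightarrow> (nat \<Rightarrow> complex mat) \<Rightarrow> (nat \<Rightarrow> bool)
     \<Rightarrow> (nat \<Rightarrow> nat \<Rightarrow> real) \<Rightarrow> (nat \<Rightarrow> complex mat) \<Rightarrow> real" where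
  "g_alpha D d rho0 drho \<alpha> z xi =
     - (\<Sum>j\<in>{1..d}. z j j)
     - (\<Sum>j\<in>{1..d}.
          (let G = Gamma D d rho0 drho z xi j in
           (if \<not> alpha_bar d \<alpha> j
            then Re (mtrace (G * minv rho0 * mat_adjoint G))
            else Re (mtrace (mat_adjoint G * minv rho0 * G)))) / 2)"

end

theory Submission
  imports Defs "HOL-Analysis.L2_Norm"
begin

lemma adj_dim[simp]: "dim_row (mat_adjoint A) = dim_col A" "dim_col (mat_adjoint A) = dim_row A"
  unfolding mat_adjoint_def by auto

lemma adj_index[simp]: "i < dim_col A \<Longrightarrow> j < dim_row A \<Longrightarrow> mat_adjoint A $$ (i,j) = cnj (A $$ (j,i))"
  unfolding mat_adjoint_def by (simp add: mat_of_rows_def)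

lemma adj_carrier[simp]: "A \<in> carrier_mat n m \<Longrightarrow> mat_adjoint A \<in> carrier_mat m n"
  unfolding carrier_mat_def by simp

lemma adj_adj[simp]: "mat_adjoint (mat_adjoint (A::complex mat)) = A"
  by (rule eq_matI, auto)

lemma adj_add: "(A::complex mat) \<in> carrier_mat n m \<Longrightarrow> B \<in> carrier_mat n m \<Longrightarrow>
   mat_adjoint (A + B) = mat_adjoint A + mat_adjoint B"
  by (rule eq_matI, auto)

lemma adj_smult: "mat_adjoint ((c::complex) \<cdot>\<^sub>m A) = cnj c \<cdot>\<^sub>m mat_adjoint A"
  by (rule eq_matI, auto)

lemma adj_one[simp]: "mat_adjoint (1\<^sub>m n :: complex mat) = 1\<^sub>m n"
  by (rule eq_matI, auto)

lemma adj_mult: "(A::complex mat) \<in> carrier_mat n k \<Longrightarrow> B \<in> carrier_mat k m \<Longrightarrow>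
   mat_adjoint (A * B) = mat_adjoint B * mat_adjoint A"
  apply (rule eq_matI)
  apply (auto simp: scalar_prod_def)
  apply (rule sum.cong, auto)
  done

lemma mtrace_sum: "A \<in> carrier_mat n n \<Longrightarrow> mtrace A = (\<Sum>i<n. A $$ (i,i))"
  unfolding mtrace_def by auto

lemma mtrace_mult: "A \<in> carrier_mat n m \<Longrightarrow> B \<in> carrier_mat m n \<Longrightarrow>
  mtrace (A * B) = (\<Sum>i<n. \<Sum>j<m. A $$ (i,j) * B $$ (j,i))"
  unfolding mtrace_def by (auto simp: scalar_prod_def atLeast0LessThan intro!: sum.cong)

lemma mtrace_cyclic: "A \<in> carrier_mat n m \<Longrightarrow> B \<in> carrier_mat m n \<Longrightarrow>
  mtrace (A * B) = mtrace (B * A)"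
  apply (simp add: mtrace_mult[of A n m B] mtrace_mult[of B m n A])
  apply (subst sum.swap) apply (simp add: mult.commute)
  done

lemma mtrace_add: "A \<in> carrier_mat n n \<Longrightarrow> B \<in> carrier_mat n n \<Longrightarrow>
  mtrace (A + B) = mtrace A + mtrace B"
  unfolding mtrace_def by (auto simp: sum.distrib)

lemma mtrace_smult: "A \<in> carrier_mat n n \<Longrightarrow> mtrace (c \<cdot>\<^sub>m A) = c * mtrace A"
  unfolding mtrace_def by (auto simp: sum_distrib_left)

lemma mtrace_adj: "(A::complex mat) \<in> carrier_mat n n \<Longrightarrow> mtrace (mat_adjoint A) = cnj (mtrace A)"
  unfolding mtrace_def by auto

lemma psd_trace:
  assumes "psd_mat D \<rho>" "C \<in> carrier_mat n D"
  shows "0 \<le> Re (mtrace (C * \<rho> * mat_adjoint C))"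
proof -
  have rho: "\<rho> \<in> carrier_mat D D" using assms unfolding psd_mat_def hermitian_mat_def by auto
  have "mtrace (C * \<rho> * mat_adjoint C) = (\<Sum>i<n. (C * \<rho> * mat_adjoint C) $$ (i,i))"
    using assms rho by (intro mtrace_sum) auto
  also have "\<dots> = (\<Sum>i<n. conjugate (vec D (\<lambda>k. cnj (C $$ (i,k)))) \<bullet> (\<rho> *\<^sub>v vec D (\<lambda>k. cnj (C $$ (i,k)))))"
  proof (rule sum.cong[OF refl])
    fix i assume i: "i \<in> {..<n}"
    show "(C * \<rho> * mat_adjoint C) $$ (i,i) = conjugate (vec D (\<lambda>k. cnj (C $$ (i,k)))) \<bullet> (\<rho> *\<^sub>v vec D (\<lambda>k. cnj (C $$ (i,k))))"
      using i assms rho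
      apply (simp add: scalar_prod_def sum_distrib_left sum_distrib_right)
      apply (subst sum.swap)
      apply (rule sum.cong[OF refl])+
      apply (simp add: mult_ac)
      done
  qed
  finally have eq: "mtrace (C * \<rho> * mat_adjoint C) = (\<Sum>i<n. conjugate (vec D (\<lambda>k. cnj (C $$ (i,k)))) \<bullet> (\<rho> *\<^sub>v vec D (\<lambda>k. cnj (C $$ (i,k)))))" .
  have psd: "\<And>v. v \<in> carrier_vec D \<Longrightarrow> 0 \<le> Re (conjugate v \<bullet> (\<rho> *\<^sub>v v))"
    using assms(1) unfolding psd_mat_def by blast
  have "0 \<le> (\<Sum>i<n. Re (conjugate (vec D (\<lambda>k. cnj (C $$ (i,k)))) \<bullet> (\<rho> *\<^sub>v vec D (\<lambda>k. cnj (C $$ (i,k))))))"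
    apply (rule sum_nonneg)
    apply (rule psd)
    apply (rule vec_carrier)
    done
  then show ?thesis by (simp only: eq Re_sum)
qed

lemma mult_entry: "A \<in> carrier_mat n k \<Longrightarrow> B \<in> carrier_mat k m \<Longrightarrow> i < n \<Longrightarrow> j < m \<Longrightarrow>
  (A * B) $$ (i,j) = (\<Sum>t<k. A $$ (i,t) * B $$ (t,j))"
  by (auto simp: scalar_prod_def atLeast0LessThan intro!: sum.cong)

definition ext1 :: "complex \<Rightarrow> complex mat \<Rightarrow> complex mat" where
  "ext1 a M = mat (Suc (dim_row M)) (Suc (dim_col M)) (\<lambda>(i,j). if i = 0 then (if j = 0 then a else 0)
      else if j = 0 then 0 else M $$ (i-1, j-1))"

lemma ext1_carrier[simp]: "M \<in> carrier_mat m k \<Longrightarrow> ext1 a M \<in> carrier_mat (Suc m) (Suc k)"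
  unfolding ext1_def carrier_mat_def by simp

lemma ext1_dim[simp]: "dim_row (ext1 a M) = Suc (dim_row M)" "dim_col (ext1 a M) = Suc (dim_col M)"
  unfolding ext1_def by simp_all

lemma ext1_00[simp]: "ext1 a M $$ (0,0) = a"
  unfolding ext1_def by simp
lemma ext1_0S[simp]: "j < dim_col M \<Longrightarrow> ext1 a M $$ (0,Suc j) = 0"
  unfolding ext1_def by simp
lemma ext1_S0[simp]: "i < dim_row M \<Longrightarrow> ext1 a M $$ (Suc i,0) = 0"
  unfolding ext1_def by simp
lemma ext1_SS[simp]: "i < dim_row M \<Longrightarrow> j < dim_col M \<Longrightarrow> ext1 a M $$ (Suc i,Suc j) = M $$ (i,j)"
  unfolding ext1_def by simp

lemma ext1_mult:
  assumes M: "M \<in> carrier_mat m k" and N: "N \<in> carrier_mat k l"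
  shows "ext1 a M * ext1 b N = ext1 (a*b) (M*N)"
proof (rule eq_matI)
  fix i j assume i: "i < dim_row (ext1 (a*b) (M*N))" and j: "j < dim_col (ext1 (a*b) (M*N))"
  have i': "i < Suc m" and j': "j < Suc l" using i j M N by auto
  have "(ext1 a M * ext1 b N) $$ (i,j) = (\<Sum>t<Suc k. ext1 a M $$ (i,t) * ext1 b N $$ (t,j))"
    by (rule mult_entry[OF ext1_carrier[OF M] ext1_carrier[OF N] i' j'])
  also have "\<dots> = ext1 a M $$ (i,0) * ext1 b N $$ (0,j) + (\<Sum>t<k. ext1 a M $$ (i,Suc t) * ext1 b N $$ (Suc t,j))"
    by (rule sum.lessThan_Suc_shift)
  also have "\<dots> = ext1 (a*b) (M*N) $$ (i,j)"
  proof (cases i)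
    case 0
    then show ?thesis using M N j' by (cases j) auto
  next
    case (Suc i0)
    then show ?thesis using M N j' i' by (cases j) (auto simp: mult_entry[OF M N] simp del: index_mult_mat(1))
  qed
  finally show "(ext1 a M * ext1 b N) $$ (i,j) = ext1 (a*b) (M*N) $$ (i,j)" .
qed (insert M N, auto)

lemma ext1_adj: "mat_adjoint (ext1 a M) = ext1 (cnj a) (mat_adjoint M)"
proof (rule eq_matI)
  fix i j assume i: "i < dim_row (ext1 (cnj a) (mat_adjoint M))" and j: "j < dim_col (ext1 (cnj a) (mat_adjoint M))"
  then show "mat_adjoint (ext1 a M) $$ (i,j) = ext1 (cnj a) (mat_adjoint M) $$ (i,j)"
    by (cases i; cases j) auto
qed auto

lemma ext1_one: "ext1 1 (1\<^sub>m m) = 1\<^sub>m (Suc m)"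
proof (rule eq_matI)
  fix i j assume i: "i < dim_row (1\<^sub>m (Suc m) :: complex mat)" and j: "j < dim_col (1\<^sub>m (Suc m) :: complex mat)"
  then show "ext1 1 (1\<^sub>m m) $$ (i,j) = 1\<^sub>m (Suc m) $$ (i,j)"
    by (cases i; cases j) auto
qed auto

lemma ext1_diag: "diagonal_mat M \<Longrightarrow> diagonal_mat (ext1 a M)"
  unfolding diagonal_mat_def
proof (intro allI impI)
  fix i j assume d: "\<forall>i<dim_row M. \<forall>j<dim_col M. i \<noteq> j \<longrightarrow> M $$ (i, j) = 0"
    and i: "i < dim_row (ext1 a M)" and j: "j < dim_col (ext1 a M)" and ij: "i \<noteq> j"
  then show "ext1 a M $$ (i, j) = 0"
    by (cases i; cases j) auto
qed

lemma mat_vec_unit: "(B::complex mat) \<in> carrier_mat n n \<Longrightarrow> i < n \<Longrightarrow> j < n \<Longrightarrow> (B *\<^sub>v unit_vec n j) $ i = B $$ (i,j)"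
  by simp

lemma cm1: "cmod (1 - complex_of_real r) = \<bar>1 - r\<bar>"
  by (metis norm_of_real of_real_1 of_real_diff)

lemma householder:
  fixes u :: "complex vec"
  assumes u: "u \<in> carrier_vec n" and n: "0 < n"
    and nu: "(\<Sum>i<n. (cmod (u$i))^2) = 1" and u0: "Im (u$0) = 0" "0 \<le> Re (u$0)"
  shows "\<exists>H. H \<in> carrier_mat n n \<and> mat_adjoint H = H \<and> H * H = 1\<^sub>m n \<and> H *\<^sub>v unit_vec n 0 = u"
proof -
  define w where "w = (\<lambda>i. (if i = 0 then 1 else 0) - u$i)"
  define nw where "nw = (\<Sum>i<n. (cmod (w i))^2)"
  define c where "c = 2 / nw"
  define H where "H = mat n n (\<lambda>(i,j). (if i = j then 1 else 0) - complex_of_real c * w i * cnj (w j))"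
  have H: "H \<in> carrier_mat n n" unfolding H_def by simp
  have Hij: "\<And>i j. i < n \<Longrightarrow> j < n \<Longrightarrow> H $$ (i,j) = (if i = j then 1 else 0) - complex_of_real c * w i * cnj (w j)"
    unfolding H_def by simp
  have Hadj: "mat_adjoint H = H"
    by (rule eq_matI) (auto simp: H_def)
  have wsq: "(\<Sum>k<n. cnj (w k) * w k) = complex_of_real nw"
    unfolding nw_def of_real_sum by (rule sum.cong, simp, simp only: complex_norm_square mult.commute)
  have cnw: "c * nw * c = 2 * c"
    unfolding c_def by (cases "nw = 0") auto
  have HH: "H * H = 1\<^sub>m n"
  proof (rule eq_matI)
    fix i j assume i: "i < dim_row (1\<^sub>m n :: complex mat)" and j: "j < dim_col (1\<^sub>m n :: complex mat)"
    then have i: "i < n" and j: "j < n" by auto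
    have "(H * H) $$ (i,j) = (\<Sum>k<n. ((if i = k then 1 else 0) - complex_of_real c * w i * cnj (w k)) *
          ((if k = j then 1 else 0) - complex_of_real c * w k * cnj (w j)))"
      by (subst mult_entry[OF H H i j], rule sum.cong, simp, simp add: Hij i j)
    also have "\<dots> = (\<Sum>k<n. (if i = k then 1 else 0) * (if k = j then 1 else 0)) 
        - (\<Sum>k<n. (if i = k then 1 else 0) * (complex_of_real c * w k * cnj (w j)))
        - (\<Sum>k<n. (if k = j then 1 else 0) * (complex_of_real c * w i * cnj (w k)))
        + complex_of_real c * w i * cnj (w j) * complex_of_real c * (\<Sum>k<n. cnj (w k) * w k)"
      by (simp add: algebra_simps sum.distrib sum_subtractf sum_distrib_left sum_distrib_right)
    also have "\<dots> = (if i = j then 1 else 0) - 2 * complex_of_real c * w i * cnj (w j)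
         + complex_of_real (c * nw * c) * w i * cnj (w j)"
      using i j by (simp add: wsq if_distrib[of "\<lambda>x. x * _"] cong: if_cong)
    also have "\<dots> = 1\<^sub>m n $$ (i,j)" using i j by (simp add: cnw)
    finally show "(H * H) $$ (i,j) = 1\<^sub>m n $$ (i,j)" .
  qed (auto simp: H_def)
  have w0: "w 0 = complex_of_real (1 - Re (u$0))"
    unfolding w_def using u0 by (simp add: complex_eq_iff)
  have split: "\<And>f::nat \<Rightarrow> real. (\<Sum>i<n. f i) = f 0 + (\<Sum>i<n-1. f (Suc i))"
    using n by (metis Suc_diff_1 sum.lessThan_Suc_shift)
  have cu0: "cmod (u$0) = Re (u$0)" using u0 by (simp add: cmod_eq_Re)
  have rest: "(\<Sum>i<n-1. (cmod (u$(Suc i)))^2) = 1 - (Re (u$0))^2"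
    using nu split[of "\<lambda>i. (cmod (u$i))^2"] cu0 by simp
  have nwv: "nw = (1 - Re (u$0))^2 + (1 - (Re (u$0))^2)"
    unfolding nw_def split[of "\<lambda>i. (cmod (w i))^2"] w0 rest[symmetric]
    by (simp add: w_def norm_minus_commute cm1)
  have Hu: "H *\<^sub>v unit_vec n 0 = u"
  proof (rule eq_vecI)
    fix i assume i: "i < dim_vec u"
    then have i: "i < n" using u by auto
    have "(H *\<^sub>v unit_vec n 0) $ i = H $$ (i,0)" by (rule mat_vec_unit[OF H i n])
    also have "\<dots> = (if i = 0 then 1 else 0) - complex_of_real c * w i * cnj (w 0)"
      unfolding H_def using i n by simp
    also have "\<dots> = u $ i"
    proof (cases "nw = 0")
      case True
      then have "\<forall>k\<in>{..<n}. (cmod (w k))^2 = 0" unfolding nw_def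
        by (subst sum_nonneg_eq_0_iff[symmetric]) auto
      then have wi: "w i = 0" using i by auto
      then have "u$i = (if i = 0 then 1 else 0)" unfolding w_def by simp
      then show ?thesis using wi by simp
    next
      case False
      then have "Re (u$0) \<noteq> 1" using nwv by auto
      then have r1: "1 - Re (u$0) \<noteq> 0" by simp
      have "nw = 2 * (1 - Re (u$0))" unfolding nwv by (simp add: power2_eq_square algebra_simps)
      then have "c * (1 - Re (u$0)) = 1" unfolding c_def using r1 by simp
      then have cw: "complex_of_real c * cnj (w 0) = 1" unfolding w0
        by (metis complex_cnj_complex_of_real of_real_1 of_real_mult)
      have "complex_of_real c * w i * cnj (w 0) = w i * (complex_of_real c * cnj (w 0))"
        by (simp add: mult_ac)
      also have "\<dots> = w i" using cw by simp
      finally have eq: "complex_of_real c * w i * cnj (w 0) = w i" .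
      show ?thesis by (subst eq) (simp add: w_def)
    qed
    finally show "(H *\<^sub>v unit_vec n 0) $ i = u $ i" .
  qed (use u H in auto)
  show ?thesis using H Hadj HH Hu by blast
qed

lemma eigen_unit:
  fixes A :: "complex mat"
  assumes A: "A \<in> carrier_mat (Suc m) (Suc m)"
  shows "\<exists>e u. u \<in> carrier_vec (Suc m) \<and> A *\<^sub>v u = e \<cdot>\<^sub>v u \<and> (\<Sum>i<Suc m. (cmod (u$i))^2) = 1
     \<and> Im (u$0) = 0 \<and> 0 \<le> Re (u$0)"
proof -
  obtain as where cp: "char_poly A = (\<Prod>a\<leftarrow>as. [:-a,1:])" and len: "length as = Suc m"
    using char_poly_factorized[OF A] by blast
  then obtain e where e: "e \<in> set as" by (cases as) auto
  have "poly (char_poly A) e = 0" unfolding cp poly_prod_list prod_list_zero_iff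
    using e by force
  then have "eigenvalue A e" using eigenvalue_root_char_poly[OF A] by simp
  then obtain v where v: "v \<in> carrier_vec (Suc m)" "v \<noteq> 0\<^sub>v (Suc m)" "A *\<^sub>v v = e \<cdot>\<^sub>v v"
    unfolding eigenvalue_def eigenvector_def using A by auto
  obtain i0 where i0: "i0 < Suc m" "v $ i0 \<noteq> 0"
  proof (rule ccontr)
    assume "\<not> thesis"
    with that have "\<forall>i<Suc m. v $ i = 0" by blast
    then have "v = 0\<^sub>v (Suc m)" using v(1) by (intro eq_vecI) auto
    with v(2) show False by simp
  qed
  define s where "s = (\<Sum>i<Suc m. (cmod (v$i))^2)"
  have "(cmod (v$i0))^2 \<le> s" unfolding s_def
    by (rule member_le_sum) (use i0 in auto)
  moreover have "0 < (cmod (v$i0))^2" using i0 by simp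
  ultimately have s: "0 < s" by linarith
  define ph where "ph = (if v$0 = 0 then 1 else cnj (v$0) / complex_of_real (cmod (v$0)))"
  have cph: "cmod ph = 1" unfolding ph_def by (simp add: norm_divide)
  define k where "k = ph / complex_of_real (sqrt s)"
  define u where "u = k \<cdot>\<^sub>v v"
  have u: "u \<in> carrier_vec (Suc m)" unfolding u_def using v by simp
  have Au: "A *\<^sub>v u = e \<cdot>\<^sub>v u"
    unfolding u_def using mult_mat_vec[OF A v(1), of k] v(3)
    by (auto intro!: eq_vecI)
  have ck: "(cmod k)^2 = 1 / s" unfolding k_def using s cph
    by (simp add: norm_divide power_divide)
  have "(\<Sum>i<Suc m. (cmod (u$i))^2) = (\<Sum>i<Suc m. (cmod k)^2 * (cmod (v$i))^2)"
    unfolding u_def using v(1) by (intro sum.cong) (auto simp: norm_mult power_mult_distrib)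
  also have "\<dots> = 1" unfolding sum_distrib_left[symmetric] ck s_def[symmetric] using s by simp
  finally have nu: "(\<Sum>i<Suc m. (cmod (u$i))^2) = 1" .
  have u0: "u $ 0 = complex_of_real (cmod (v$0) / sqrt s)"
  proof (cases "v$0 = 0")
    case True
    then show ?thesis unfolding u_def k_def ph_def using v(1) by simp
  next
    case False
    have "u $ 0 = cnj (v$0) * v$0 / complex_of_real (cmod (v$0)) / complex_of_real (sqrt s)"
      unfolding u_def k_def ph_def using v(1) False by simp
    also have "cnj (v$0) * v$0 = complex_of_real ((cmod (v$0))^2)"
      by (simp only: complex_norm_square mult.commute)
    finally show ?thesis using False by (simp add: power2_eq_square)
  qed
  have "Im (u$0) = 0" "0 \<le> Re (u$0)" unfolding u0 using s by simp_all
  then show ?thesis using u Au nu by blast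
qed

lemma spectral:
  fixes A :: "complex mat"
  assumes "A \<in> carrier_mat n n" "mat_adjoint A = A"
  shows "\<exists>V L. V \<in> carrier_mat n n \<and> L \<in> carrier_mat n n \<and> diagonal_mat L \<and>
     mat_adjoint V * V = 1\<^sub>m n \<and> V * mat_adjoint V = 1\<^sub>m n \<and> A = V * L * mat_adjoint V"
  using assms
proof (induction n arbitrary: A)
  case 0
  have "A = 1\<^sub>m 0 * 1\<^sub>m 0 * mat_adjoint (1\<^sub>m 0)"
    using 0 by (intro eq_matI) auto
  moreover have "diagonal_mat (1\<^sub>m 0 :: complex mat)" unfolding diagonal_mat_def by auto
  ultimately show ?case by (intro exI[of _ "1\<^sub>m 0"]) auto
next
  case (Suc m)
  have A: "A \<in> carrier_mat (Suc m) (Suc m)" and Ah: "mat_adjoint A = A" using Suc.prems by auto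
  obtain e u where u: "u \<in> carrier_vec (Suc m)" and Au: "A *\<^sub>v u = e \<cdot>\<^sub>v u"
    and nu: "(\<Sum>i<Suc m. (cmod (u$i))^2) = 1" and u0: "Im (u$0) = 0" "0 \<le> Re (u$0)"
    using eigen_unit[OF A] by blast
  obtain H where H: "H \<in> carrier_mat (Suc m) (Suc m)" and Hh: "mat_adjoint H = H"
    and HH: "H * H = 1\<^sub>m (Suc m)" and He: "H *\<^sub>v unit_vec (Suc m) 0 = u"
    using householder[OF u _ nu u0] by auto
  define B where "B = H * A * H"
  have B: "B \<in> carrier_mat (Suc m) (Suc m)" unfolding B_def using H A by auto
  have Bh: "mat_adjoint B = B"
    unfolding B_def using H A by (simp add: adj_mult[of _ "Suc m" "Suc m" _ "Suc m"] Hh Ah)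
  have e0: "unit_vec (Suc m) 0 \<in> carrier_vec (Suc m)" by simp
  have "B *\<^sub>v unit_vec (Suc m) 0 = H *\<^sub>v (A *\<^sub>v (H *\<^sub>v unit_vec (Suc m) 0))"
    unfolding B_def using assoc_mult_mat_vec[OF mult_carrier_mat[OF H A] H e0]
      assoc_mult_mat_vec[OF H A mult_mat_vec_carrier[OF H e0]] by simp
  also have "\<dots> = e \<cdot>\<^sub>v (H *\<^sub>v u)" unfolding He Au using mult_mat_vec[OF H u] by simp
  also have "H *\<^sub>v u = unit_vec (Suc m) 0"
    unfolding He[symmetric] using H by (simp add: assoc_mult_mat_vec[symmetric, of H _ _ H _ "unit_vec (Suc m) 0"] HH)
  finally have Be: "B *\<^sub>v unit_vec (Suc m) 0 = e \<cdot>\<^sub>v unit_vec (Suc m) 0" .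
  have col0: "\<And>i. i < Suc m \<Longrightarrow> B $$ (i,0) = (if i = 0 then e else 0)"
  proof -
    fix i assume i: "i < Suc m"
    have "B $$ (i,0) = (B *\<^sub>v unit_vec (Suc m) 0) $ i" using mat_vec_unit[OF B i] by simp
    then show "B $$ (i,0) = (if i = 0 then e else 0)" unfolding Be using i by simp
  qed
  have Bsym: "\<And>i j. i < Suc m \<Longrightarrow> j < Suc m \<Longrightarrow> B $$ (i,j) = cnj (B $$ (j,i))"
  proof -
    fix i j assume i: "i < Suc m" and j: "j < Suc m"
    have "B $$ (i,j) = mat_adjoint B $$ (i,j)" using Bh by simp
    then show "B $$ (i,j) = cnj (B $$ (j,i))" using B i j by simp
  qed
  have er: "cnj e = e" using Bsym[of 0 0] col0[of 0] by simp
  define A3 where "A3 = mat m m (\<lambda>(i,j). B $$ (Suc i, Suc j))"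
  have A3: "A3 \<in> carrier_mat m m" unfolding A3_def by simp
  have A3h: "mat_adjoint A3 = A3"
  proof (rule eq_matI)
    fix i j assume i: "i < dim_row A3" and j: "j < dim_col A3"
    then have i': "i < m" and j': "j < m" using A3 by auto
    have "mat_adjoint A3 $$ (i,j) = cnj (B $$ (Suc j, Suc i))" using i' j' A3 by (simp add: A3_def)
    also have "\<dots> = B $$ (Suc i, Suc j)" using Bsym[of "Suc i" "Suc j"] i' j' by simp
    also have "\<dots> = A3 $$ (i,j)" using i' j' by (simp add: A3_def)
    finally show "mat_adjoint A3 $$ (i,j) = A3 $$ (i,j)" .
  qed (use A3 in auto)
  have BA3: "B = ext1 e A3"
  proof (rule eq_matI)
    fix i j assume i: "i < dim_row (ext1 e A3)" and j: "j < dim_col (ext1 e A3)"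
    then have i': "i < Suc m" and j': "j < Suc m" using A3 by auto
    show "B $$ (i,j) = ext1 e A3 $$ (i,j)"
    proof (cases i)
      case 0
      then show ?thesis using col0 Bsym[OF i' j'] j' A3 er col0[OF j'] by (cases j) auto
    next
      case (Suc i0)
      then show ?thesis using col0[OF i'] j' i' A3 by (cases j) (auto simp: A3_def)
    qed
  qed (use A3 B in auto)
  obtain V3 L3 where V3: "V3 \<in> carrier_mat m m" and L3: "L3 \<in> carrier_mat m m" and dL3: "diagonal_mat L3"
    and V3a: "mat_adjoint V3 * V3 = 1\<^sub>m m" and V3b: "V3 * mat_adjoint V3 = 1\<^sub>m m"
    and A3e: "A3 = V3 * L3 * mat_adjoint V3"
    using Suc.IH[OF A3 A3h] by blast
  define E where "E = ext1 1 V3"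
  have E: "E \<in> carrier_mat (Suc m) (Suc m)" unfolding E_def using V3 by simp
  have Ec: "mat_adjoint E \<in> carrier_mat (Suc m) (Suc m)" using E by simp
  have Ea: "mat_adjoint E = ext1 1 (mat_adjoint V3)" unfolding E_def ext1_adj by simp
  have EaE: "mat_adjoint E * E = 1\<^sub>m (Suc m)"
    unfolding Ea unfolding E_def ext1_mult[OF adj_carrier[OF V3] V3] V3a by (simp add: ext1_one)
  have EEa: "E * mat_adjoint E = 1\<^sub>m (Suc m)"
    unfolding Ea unfolding E_def ext1_mult[OF V3 adj_carrier[OF V3]] V3b by (simp add: ext1_one)
  define V where "V = H * E"
  define L where "L = ext1 e L3"
  have V: "V \<in> carrier_mat (Suc m) (Suc m)" unfolding V_def using H E by simp
  have L: "L \<in> carrier_mat (Suc m) (Suc m)" unfolding L_def using L3 by simp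
  have dL: "diagonal_mat L" unfolding L_def by (rule ext1_diag[OF dL3])
  have Va: "mat_adjoint V = mat_adjoint E * H" unfolding V_def using adj_mult[OF H E] Hh by simp
  have EL: "E * L * mat_adjoint E = B"
    unfolding Ea unfolding E_def L_def BA3 A3e
    using ext1_mult[OF V3 L3, of 1 e] ext1_mult[OF mult_carrier_mat[OF V3 L3] adj_carrier[OF V3], of e 1]
    by simp
  have HHX: "\<And>X k. X \<in> carrier_mat (Suc m) k \<Longrightarrow> H * (H * X) = X"
    using H HH by (simp add: assoc_mult_mat[symmetric, of H _ _ H _ X for X])
  have "mat_adjoint V * V = mat_adjoint E * (H * (H * E))" unfolding Va unfolding V_def
    by (rule assoc_mult_mat[OF Ec H mult_carrier_mat[OF H E]])
  also have "\<dots> = 1\<^sub>m (Suc m)" using HHX[OF E] EaE by simp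
  finally have VaV: "mat_adjoint V * V = 1\<^sub>m (Suc m)" .
  have "V * mat_adjoint V = H * (E * (mat_adjoint E * H))" unfolding Va unfolding V_def
    by (rule assoc_mult_mat[OF H E mult_carrier_mat[OF Ec H]])
  also have "E * (mat_adjoint E * H) = (E * mat_adjoint E) * H"
    by (rule assoc_mult_mat[OF E Ec H, symmetric])
  also have "H * ((E * mat_adjoint E) * H) = 1\<^sub>m (Suc m)" unfolding EEa using H HH by simp
  finally have VVa: "V * mat_adjoint V = 1\<^sub>m (Suc m)" .
  have EL': "E * L \<in> carrier_mat (Suc m) (Suc m)" using E L by simp
  have "V * L * mat_adjoint V = (H * (E * L)) * (mat_adjoint E * H)" unfolding Va unfolding V_def
    using assoc_mult_mat[OF H E L] by simp
  also have "\<dots> = H * ((E * L) * (mat_adjoint E * H))"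
    by (rule assoc_mult_mat[OF H EL' mult_carrier_mat[OF Ec H]])
  also have "(E * L) * (mat_adjoint E * H) = ((E * L) * mat_adjoint E) * H"
    by (rule assoc_mult_mat[OF EL' Ec H, symmetric])
  also have "\<dots> = B * H" using EL by simp
  also have "B * H = (H * A) * (H * H)" unfolding B_def
    by (rule assoc_mult_mat[OF mult_carrier_mat[OF H A] H H])
  also have "\<dots> = H * A" unfolding HH using H A by simp
  also have "H * (H * A) = A" using HHX[OF A] .
  finally have "A = V * L * mat_adjoint V" by simp
  then show ?case using V L dL VaV VVa by blast
qed

lemma prod_list_remove1: "x \<in> set xs \<Longrightarrow> prod_list (map f xs) = (f x :: 'a :: comm_monoid_mult) * prod_list (map f (remove1 x xs))"
  by (induction xs) (auto simp: mult_ac)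

lemma csq: "(complex_of_real (cmod z))^2 = z * cnj z"
  using complex_norm_square[of z] by simp

lemma sum_list_mset_conv: "sum_list (map f xs) = sum_mset (image_mset f (mset xs))"
  by (subst sum_mset_sum_list[symmetric]) simp

lemma sum_list_mset_eq: fixes f :: "'a \<Rightarrow> 'b::comm_monoid_add"
  assumes "mset xs = mset ys" shows "sum_list (map f xs) = sum_list (map f ys)"
  by (simp only: sum_list_mset_conv[of f xs] sum_list_mset_conv[of f ys] assms)

lemma lin_factors_mset:
  fixes as bs :: "complex list"
  assumes "(\<Prod>a\<leftarrow>as. [:-a,1:]) = (\<Prod>a\<leftarrow>bs. [:-a,1:])"
  shows "mset as = mset bs"
  using assms
proof (induction as arbitrary: bs)
  case Nil
  have "length bs = degree (\<Prod>a\<leftarrow>bs. [:-a,1:])" using degree_linear_factors[of uminus bs] by simp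
  also have "\<dots> = 0" using Nil by (metis degree_1 prod_list.Nil list.map(1))
  finally show ?case by simp
next
  case (Cons a as)
  have "poly (\<Prod>x\<leftarrow>a#as. [:-x,1:]) a = 0" by simp
  then have "poly (\<Prod>x\<leftarrow>bs. [:-x,1:]) a = 0" by (subst Cons.prems[symmetric])
  then have "a \<in> set bs" unfolding poly_prod_list prod_list_zero_iff by auto
  then have eq: "(\<Prod>x\<leftarrow>bs. [:-x,1:]) = [:-a,1:] * (\<Prod>x\<leftarrow>remove1 a bs. [:-x,1:])"
    by (rule prod_list_remove1)
  have "[:-a,1:] * (\<Prod>x\<leftarrow>as. [:-x,1:]) = [:-a,1:] * (\<Prod>x\<leftarrow>remove1 a bs. [:-x,1:])"
    using Cons.prems eq by simp
  moreover have nz: "[:-a,1:] \<noteq> (0::complex poly)" by simp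
  ultimately have "(\<Prod>x\<leftarrow>as. [:-x,1:]) = (\<Prod>x\<leftarrow>remove1 a bs. [:-x,1:])"
    using mult_left_cancel[OF nz] by blast
  then have "mset as = mset (remove1 a bs)" by (rule Cons.IH)
  then show ?case using \<open>a \<in> set bs\<close> by simp
qed

lemma trace_norm_ge:
  fixes B U :: "complex mat"
  assumes B: "B \<in> carrier_mat n n" and U: "U \<in> carrier_mat n n" and UU: "U * mat_adjoint U = 1\<^sub>m n"
  shows "Re (mtrace (B * U)) \<le> trace_norm B"
proof -
  define P where "P = mat_adjoint B * B"
  have Ba: "mat_adjoint B \<in> carrier_mat n n" using B by simp
  have P: "P \<in> carrier_mat n n" unfolding P_def using mult_carrier_mat[OF Ba B] .
  have Ph: "mat_adjoint P = P" unfolding P_def adj_mult[OF Ba B] by simp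
  obtain V L where V: "V \<in> carrier_mat n n" and L: "L \<in> carrier_mat n n" and dL: "diagonal_mat L"
    and VaV: "mat_adjoint V * V = 1\<^sub>m n" and VVa: "V * mat_adjoint V = 1\<^sub>m n"
    and Pe: "P = V * L * mat_adjoint V"
    using spectral[OF P Ph] by blast
  have Va: "mat_adjoint V \<in> carrier_mat n n" using V by simp
  have Lut: "upper_triangular L" using dL unfolding diagonal_mat_def upper_triangular_def
    using L by auto
  have sim: "similar_mat P L"
    by (rule similar_matI[of P L V "mat_adjoint V" n]) (use P L V Va VaV VVa Pe in auto)
  have cp: "char_poly P = (\<Prod>a\<leftarrow>diag_mat L. [:-a,1:])"
    using char_poly_similar[OF sim] char_poly_upper_triangular[OF L Lut] by simp
  let ?f = "\<lambda>e. sqrt (Re e)"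
  let ?Q = "\<lambda>s. \<exists>es. char_poly P = (\<Prod>e\<leftarrow>es. [:- e, 1:]) \<and> s = sum_list (map ?f es)"
  have "?Q (sum_list (map ?f (diag_mat L)))" using cp by blast
  then have "?Q (trace_norm B)" unfolding trace_norm_def P_def[symmetric] by (rule someI)
  then obtain es where es: "char_poly P = (\<Prod>e\<leftarrow>es. [:- e, 1:])" and tn: "trace_norm B = sum_list (map ?f es)"
    by auto
  have "(\<Prod>e\<leftarrow>es. [:- e, 1:]) = (\<Prod>a\<leftarrow>diag_mat L. [:-a,1:])" using es cp by simp
  then have "mset es = mset (diag_mat L)" by (rule lin_factors_mset)
  then have "sum_list (map ?f es) = sum_list (map ?f (diag_mat L))"
    by (rule sum_list_mset_eq)
  also have "\<dots> = (\<Sum>i<n. ?f (L $$ (i,i)))"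
    using L unfolding diag_mat_def
    by (simp add: sum_set_upt_conv_sum_list_nat[symmetric] atLeast0LessThan)
  finally have tn2: "trace_norm B = (\<Sum>i<n. sqrt (Re (L $$ (i,i))))" using tn by simp
  define Y where "Y = mat_adjoint V * U"
  define C where "C = B * V"
  have Y: "Y \<in> carrier_mat n n" unfolding Y_def using mult_carrier_mat[OF Va U] .
  have C: "C \<in> carrier_mat n n" unfolding C_def using mult_carrier_mat[OF B V] .
  have UB: "U * B \<in> carrier_mat n n" using mult_carrier_mat[OF U B] .
  have "mtrace (B * U) = mtrace (U * B)" by (rule mtrace_cyclic[OF B U])
  also have "U * B = ((U * B) * V) * mat_adjoint V"
    using assoc_mult_mat[OF UB V Va] VVa right_mult_one_mat[OF UB] by simp
  also have "mtrace \<dots> = mtrace (mat_adjoint V * ((U * B) * V))"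
    by (rule mtrace_cyclic[OF mult_carrier_mat[OF UB V] Va])
  also have "mat_adjoint V * ((U * B) * V) = Y * C"
    unfolding Y_def C_def
    by (simp only: assoc_mult_mat[OF U B V] assoc_mult_mat[OF Va U mult_carrier_mat[OF B V]])
  finally have tr: "mtrace (B * U) = mtrace (Y * C)" .
  have Ya: "mat_adjoint Y = mat_adjoint U * V" unfolding Y_def adj_mult[OF Va U] by simp
  have Ua: "mat_adjoint U \<in> carrier_mat n n" using U by simp
  have "Y * mat_adjoint Y = mat_adjoint V * ((U * mat_adjoint U) * V)"
    unfolding Ya unfolding Y_def
    by (simp only: assoc_mult_mat[OF Va U mult_carrier_mat[OF Ua V]] assoc_mult_mat[OF U Ua V])
  also have "\<dots> = 1\<^sub>m n" unfolding UU using left_mult_one_mat[OF V] VaV by simp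
  finally have YY: "Y * mat_adjoint Y = 1\<^sub>m n" .
  have Ca: "mat_adjoint C = mat_adjoint V * mat_adjoint B" unfolding C_def adj_mult[OF B V] by simp
  have "mat_adjoint C * C = mat_adjoint V * (P * V)"
    unfolding Ca unfolding C_def P_def
    by (simp only: assoc_mult_mat[OF Va Ba mult_carrier_mat[OF B V]] assoc_mult_mat[OF Ba B V])
  also have "P * V = (V * L) * (mat_adjoint V * V)"
    unfolding Pe by (rule assoc_mult_mat[OF mult_carrier_mat[OF V L] Va V])
  also have "\<dots> = V * L" unfolding VaV using right_mult_one_mat[OF mult_carrier_mat[OF V L]] .
  also have "mat_adjoint V * (V * L) = (mat_adjoint V * V) * L"
    by (rule assoc_mult_mat[OF Va V L, symmetric])
  also have "\<dots> = L" unfolding VaV using left_mult_one_mat[OF L] .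
  finally have CC: "mat_adjoint C * C = L" .
  have rowY: "\<And>i. i < n \<Longrightarrow> (\<Sum>k<n. (cmod (Y $$ (i,k)))^2) = 1"
  proof -
    fix i assume i: "i < n"
    have "complex_of_real (\<Sum>k<n. (cmod (Y $$ (i,k)))^2) = (\<Sum>k<n. Y $$ (i,k) * mat_adjoint Y $$ (k,i))"
      unfolding of_real_sum using Y i by (intro sum.cong) (auto simp: csq)
    also have "\<dots> = (Y * mat_adjoint Y) $$ (i,i)" using mult_entry[OF Y adj_carrier[OF Y] i i] by simp
    also have "\<dots> = 1" unfolding YY using i by simp
    finally show "(\<Sum>k<n. (cmod (Y $$ (i,k)))^2) = 1" using of_real_eq_1_iff by blast
  qed
  have colC: "\<And>i. i < n \<Longrightarrow> (\<Sum>k<n. (cmod (C $$ (k,i)))^2) = Re (L $$ (i,i))"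
  proof -
    fix i assume i: "i < n"
    have "complex_of_real (\<Sum>k<n. (cmod (C $$ (k,i)))^2) = (\<Sum>k<n. mat_adjoint C $$ (i,k) * C $$ (k,i))"
      unfolding of_real_sum using C i by (intro sum.cong) (auto simp: csq mult.commute)
    also have "\<dots> = (mat_adjoint C * C) $$ (i,i)" using mult_entry[OF adj_carrier[OF C] C i i] by simp
    also have "\<dots> = L $$ (i,i)" unfolding CC ..
    finally show "(\<Sum>k<n. (cmod (C $$ (k,i)))^2) = Re (L $$ (i,i))"
      by (metis Re_complex_of_real)
  qed
  have "Re (mtrace (B * U)) = (\<Sum>i<n. Re (\<Sum>k<n. Y $$ (i,k) * C $$ (k,i)))"
    unfolding tr mtrace_mult[OF Y C] Re_sum ..
  also have "\<dots> \<le> (\<Sum>i<n. sqrt (Re (L $$ (i,i))))"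
  proof (rule sum_mono)
    fix i assume i: "i \<in> {..<n}"
    have "Re (\<Sum>k<n. Y $$ (i,k) * C $$ (k,i)) \<le> cmod (\<Sum>k<n. Y $$ (i,k) * C $$ (k,i))"
      by (rule complex_Re_le_cmod)
    also have "\<dots> \<le> (\<Sum>k<n. cmod (Y $$ (i,k) * C $$ (k,i)))" by (rule norm_sum)
    also have "\<dots> = (\<Sum>k\<in>{..<n}. \<bar>cmod (Y $$ (i,k))\<bar> * \<bar>cmod (C $$ (k,i))\<bar>)"
      by (simp add: norm_mult)
    also have "\<dots> \<le> L2_set (\<lambda>k. cmod (Y $$ (i,k))) {..<n} * L2_set (\<lambda>k. cmod (C $$ (k,i))) {..<n}"
      by (rule L2_set_mult_ineq)
    also have "\<dots> = sqrt (Re (L $$ (i,i)))"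
      unfolding L2_set_def using rowY[of i] colC[of i] i by simp
    finally show "Re (\<Sum>k<n. Y $$ (i,k) * C $$ (k,i)) \<le> sqrt (Re (L $$ (i,i)))" .
  qed
  finally show ?thesis using tn2 by simp
qed

lemma minv_ex:
  assumes A: "A \<in> carrier_mat n n" and ex: "\<exists>B. B \<in> carrier_mat n n \<and> A * B = 1\<^sub>m n \<and> B * A = 1\<^sub>m n"
  shows "minv A \<in> carrier_mat n n \<and> A * minv A = 1\<^sub>m n \<and> minv A * A = 1\<^sub>m n"
proof -
  have d: "dim_row A = n" using A by simp
  show ?thesis unfolding minv_def d using someI_ex[OF ex] .
qed

lemma minv_invertible:
  assumes A: "A \<in> carrier_mat n n" and inv: "invertible_mat A"
  shows "minv A \<in> carrier_mat n n \<and> A * minv A = 1\<^sub>m n \<and> minv A * A = 1\<^sub>m n"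
proof (rule minv_ex[OF A])
  obtain B where AB: "A * B = 1\<^sub>m (dim_row A)" and BA: "B * A = 1\<^sub>m (dim_row B)"
    using inv unfolding invertible_mat_def inverts_mat_def by blast
  have "dim_col B = n" using arg_cong[OF AB, of dim_col] A by simp
  moreover have "dim_row B = n" using arg_cong[OF BA, of dim_col] A by simp
  ultimately have "B \<in> carrier_mat n n" by (intro carrier_matI) auto
  then show "\<exists>B. B \<in> carrier_mat n n \<and> A * B = 1\<^sub>m n \<and> B * A = 1\<^sub>m n"
    using AB BA A \<open>dim_row B = n\<close> by auto
qed

definition nxt :: "nat \<Rightarrow> nat \<Rightarrow> nat" where "nxt d a = (if a = d - 1 then 0 else Suc a)"
definition scf :: "nat \<Rightarrow> nat \<Rightarrow> complex" where "scf d a = (if a = d - 1 \<and> 4 dvd d then - \<i> else \<i>)"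

lemma nxt_less: "a < d \<Longrightarrow> nxt d a < d" unfolding nxt_def by auto
lemma nxt_neq: "2 \<le> d \<Longrightarrow> a < d \<Longrightarrow> nxt d a \<noteq> a" unfolding nxt_def by auto

lemma S_entry:
  assumes "2 \<le> d" "a < d" "b < d"
  shows "S_mat d $$ (a,b) = (if b = a then 1 else if b = nxt d a then scf d a else 0)"
  unfolding S_mat_def nxt_def scf_def using assms by auto

lemma S_carrier: "S_mat d \<in> carrier_mat d d" unfolding S_mat_def by simp

lemma sum_two_delta:
  fixes f :: "nat \<Rightarrow> complex"
  assumes "a < n" "b < n" "a \<noteq> b"
  shows "(\<Sum>k<n. (if k = a then 1 else if k = b then c else 0) * f k) = f a + c * f b"
proof -
  have "(\<Sum>k<n. (if k = a then 1 else if k = b then c else 0) * f k)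
      = (\<Sum>k<n. (if k = a then f k else 0) + (if k = b then c * f k else 0))"
    using assms by (intro sum.cong) auto
  also have "\<dots> = f a + c * f b" using assms by (simp add: sum.distrib)
  finally show ?thesis .
qed

lemma S_mult_vec:
  assumes d: "2 \<le> d" and v: "v \<in> carrier_vec d" and a: "a < d"
  shows "(S_mat d *\<^sub>v v) $ a = v $ a + scf d a * v $ nxt d a"
proof -
  have "(S_mat d *\<^sub>v v) $ a = (\<Sum>b<d. S_mat d $$ (a,b) * v $ b)"
    using a v S_carrier[of d] by (auto simp: scalar_prod_def atLeast0LessThan intro!: sum.cong)
  also have "\<dots> = (\<Sum>b<d. (if b = a then 1 else if b = nxt d a then scf d a else 0) * v $ b)"
    using d a by (intro sum.cong) (auto simp: S_entry)
  also have "\<dots> = v $ a + scf d a * v $ nxt d a"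
    by (rule sum_two_delta) (use a d nxt_less[OF a] nxt_neq[OF d a] in auto)
  finally show ?thesis .
qed

lemma i_pow_mod4: "\<i> ^ d = \<i> ^ (d mod 4)"
proof -
  have "\<i> ^ d = \<i> ^ (4 * (d div 4) + d mod 4)" by (simp only: mult_div_mod_eq)
  also have "\<dots> = (\<i> ^ 4) ^ (d div 4) * \<i> ^ (d mod 4)" by (simp only: power_add power_mult)
  also have "\<i> ^ 4 = (1::complex)" by (simp add: numeral_eq_Suc)
  finally show ?thesis by simp
qed

lemma aux_lin: "(p::complex) * z + s * z = 0 \<Longrightarrow> (c * p + c * s) * z = 0"
proof -
  assume h: "p * z + s * z = 0"
  have "(c * p + c * s) * z = c * (p * z + s * z)" by (simp add: algebra_simps)
  then show ?thesis using h by simp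
qed

lemma S_det: assumes d: "2 \<le> d" shows "det (S_mat d) \<noteq> 0"
proof
  assume "det (S_mat d) = 0"
  then obtain v where v: "v \<in> carrier_vec d" "v \<noteq> 0\<^sub>v d" "S_mat d *\<^sub>v v = 0\<^sub>v d"
    using det_0_iff_vec_prod_zero[OF S_carrier] by blast
  have row: "\<And>a. a < d \<Longrightarrow> v $ a + scf d a * v $ nxt d a = 0"
    using S_mult_vec[OF d v(1)] v(3) by (metis index_zero_vec(1))
  have rec: "\<And>a. Suc a < d \<Longrightarrow> v $ Suc a = \<i> * v $ a"
  proof -
    fix a assume a: "Suc a < d"
    have an: "a \<noteq> d - 1" using a by arith
    have "v $ a + \<i> * v $ Suc a = 0" using row[of a] a an unfolding nxt_def scf_def by simp
    then have "\<i> * (v $ a + \<i> * v $ Suc a) = 0" by simp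
    then show "v $ Suc a = \<i> * v $ a" by (simp add: algebra_simps)
  qed
  have pw: "\<And>a. a < d \<Longrightarrow> v $ a = \<i> ^ a * v $ 0"
  proof -
    fix a show "a < d \<Longrightarrow> v $ a = \<i> ^ a * v $ 0"
      by (induction a) (auto simp: rec)
  qed
  have last: "v $ (d - 1) + scf d (d - 1) * v $ 0 = 0"
    using row[of "d - 1"] d unfolding nxt_def by auto
  have "\<i> ^ (d - 1) * v $ 0 + scf d (d - 1) * v $ 0 = 0" using last pw[of "d - 1"] d by simp
  then have eq0: "(\<i> * \<i> ^ (d - 1) + \<i> * scf d (d - 1)) * v $ 0 = 0" by (rule aux_lin)
  have dd: "Suc (d - 1) = d" using d by arith
  have "\<i> * \<i> ^ (d - 1) = \<i> ^ d" by (metis dd power_Suc)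
  then have eq: "(\<i> ^ d + \<i> * scf d (d - 1)) * v $ 0 = 0" using eq0 by (simp only:)
  have nz: "\<i> ^ d + \<i> * scf d (d - 1) \<noteq> 0"
  proof -
    have c: "scf d (d - 1) = (if d mod 4 = 0 then - \<i> else \<i>)" unfolding scf_def
      by (simp add: dvd_eq_mod_eq_0)
    have i2: "\<i> ^ 2 = (-1::complex)" by (rule power2_i)
    have i3: "\<i> ^ 3 = - (\<i>::complex)" by (simp add: power_numeral_reduce)
    have "d mod 4 = 0 \<or> d mod 4 = 1 \<or> d mod 4 = 2 \<or> d mod 4 = 3" by arith
    then show ?thesis
    proof (elim disjE)
      assume h: "d mod 4 = 0" show ?thesis unfolding i_pow_mod4[of d] c h by (simp add: complex_eq_iff)
    next
      assume h: "d mod 4 = 1" show ?thesis unfolding i_pow_mod4[of d] c h by (simp add: complex_eq_iff)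
    next
      assume h: "d mod 4 = 2" show ?thesis unfolding i_pow_mod4[of d] c h i2 by (simp add: complex_eq_iff)
    next
      assume h: "d mod 4 = 3" show ?thesis unfolding i_pow_mod4[of d] c h i3 by (simp add: complex_eq_iff)
    qed
  qed
  have v0: "v $ 0 = 0" using eq nz by simp
  have "v = 0\<^sub>v d" using v(1) pw v0 by (intro eq_vecI) auto
  with v(2) show False by simp
qed

lemma T_S:
  assumes d: "2 \<le> d"
  shows "T_mat d \<in> carrier_mat d d \<and> S_mat d * T_mat d = 1\<^sub>m d \<and> T_mat d * S_mat d = 1\<^sub>m d"
proof -
  have "S_mat d \<in> Units (ring_mat TYPE(complex) d undefined)"
    by (rule det_non_zero_imp_unit[OF S_carrier S_det[OF d]])
  then have "\<exists>B. B \<in> carrier_mat d d \<and> S_mat d * B = 1\<^sub>m d \<and> B * S_mat d = 1\<^sub>m d"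
    unfolding Units_def ring_mat_def by auto
  then show ?thesis unfolding T_mat_def using minv_ex[OF S_carrier] by blast
qed

lemma addc: "A \<in> carrier_mat n m \<Longrightarrow> B \<in> carrier_mat n m \<Longrightarrow> A + B \<in> carrier_mat n m"
  by simp

lemma adjR:
  fixes R \<rho> :: "complex mat"
  assumes rho: "\<rho> \<in> carrier_mat D D" and rh: "mat_adjoint \<rho> = \<rho>" and R: "R \<in> carrier_mat D D"
    and rR: "\<rho> * R = 1\<^sub>m D"
  shows "mat_adjoint R = R"
proof -
  have Ra: "mat_adjoint R \<in> carrier_mat D D" using R by simp
  have Rr: "mat_adjoint R * \<rho> = 1\<^sub>m D"
    using adj_mult[OF rho R] rR rh by simp
  have "mat_adjoint R = mat_adjoint R * (\<rho> * R)" unfolding rR using right_mult_one_mat[OF Ra] by simp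
  also have "\<dots> = (mat_adjoint R * \<rho>) * R" by (rule assoc_mult_mat[OF Ra rho R, symmetric])
  also have "\<dots> = R" unfolding Rr using left_mult_one_mat[OF R] .
  finally show ?thesis .
qed

lemma trace_adj_swap:
  fixes A B :: "complex mat"
  assumes A: "A \<in> carrier_mat D D" and B: "B \<in> carrier_mat D D"
  shows "mtrace (B * mat_adjoint A) = cnj (mtrace (A * mat_adjoint B))"
proof -
  have "mat_adjoint (A * mat_adjoint B) = B * mat_adjoint A"
    using adj_mult[OF A adj_carrier[OF B]] by simp
  then show ?thesis using mtrace_adj[OF mult_carrier_mat[OF A adj_carrier[OF B]]] by simp
qed

lemma quad_a:
  fixes R \<rho> W G :: "complex mat"
  assumes psd: "psd_mat D \<rho>" and R: "R \<in> carrier_mat D D"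
    and rR: "\<rho> * R = 1\<^sub>m D" and Rr: "R * \<rho> = 1\<^sub>m D"
    and W: "W \<in> carrier_mat D D" and G: "G \<in> carrier_mat D D"
  shows "0 \<le> Re (mtrace (W * \<rho> * mat_adjoint W)) + 2 * Re (mtrace (G * mat_adjoint W))
            + Re (mtrace (G * R * mat_adjoint G))"
proof -
  have rho: "\<rho> \<in> carrier_mat D D" and rh: "mat_adjoint \<rho> = \<rho>"
    using psd unfolding psd_mat_def hermitian_mat_def by auto
  have Rh: "mat_adjoint R = R" by (rule adjR[OF rho rh R rR])
  have Wa: "mat_adjoint W \<in> carrier_mat D D" and Ga: "mat_adjoint G \<in> carrier_mat D D" using W G by auto
  have GR: "G * R \<in> carrier_mat D D" using mult_carrier_mat[OF G R] .
  have Wr: "W * \<rho> \<in> carrier_mat D D" using mult_carrier_mat[OF W rho] .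
  have RGa: "R * mat_adjoint G \<in> carrier_mat D D" using mult_carrier_mat[OF R Ga] .
  define C where "C = W + G * R"
  have C: "C \<in> carrier_mat D D" unfolding C_def using W GR by simp
  have Ca: "mat_adjoint C = mat_adjoint W + R * mat_adjoint G"
    unfolding C_def adj_add[OF W GR] adj_mult[OF G R] Rh ..
  have "C * \<rho> = W * \<rho> + (G * R) * \<rho>" unfolding C_def by (rule add_mult_distrib_mat[OF W GR rho])
  also have "(G * R) * \<rho> = G" using assoc_mult_mat[OF G R rho] Rr right_mult_one_mat[OF G] by simp
  finally have Cr: "C * \<rho> = W * \<rho> + G" .
  have "C * \<rho> * mat_adjoint C = (W * \<rho> + G) * (mat_adjoint W + R * mat_adjoint G)"
    unfolding Cr Ca ..
  also have "\<dots> = (W * \<rho> * mat_adjoint W + W * \<rho> * (R * mat_adjoint G))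
        + (G * mat_adjoint W + G * (R * mat_adjoint G))"
    using add_mult_distrib_mat[OF Wr G addc[OF Wa RGa]]
      mult_add_distrib_mat[OF Wr Wa RGa] mult_add_distrib_mat[OF G Wa RGa] by simp
  also have "W * \<rho> * (R * mat_adjoint G) = W * mat_adjoint G"
    using assoc_mult_mat[OF W rho RGa] assoc_mult_mat[OF rho R Ga, symmetric] rR left_mult_one_mat[OF Ga]
    by simp
  also have "G * (R * mat_adjoint G) = G * R * mat_adjoint G"
    by (rule assoc_mult_mat[OF G R Ga, symmetric])
  finally have eq: "C * \<rho> * mat_adjoint C = (W * \<rho> * mat_adjoint W + W * mat_adjoint G)
        + (G * mat_adjoint W + G * R * mat_adjoint G)" .
  have c1: "W * \<rho> * mat_adjoint W \<in> carrier_mat D D" using mult_carrier_mat[OF Wr Wa] .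
  have c2: "W * mat_adjoint G \<in> carrier_mat D D" using mult_carrier_mat[OF W Ga] .
  have c3: "G * mat_adjoint W \<in> carrier_mat D D" using mult_carrier_mat[OF G Wa] .
  have c4: "G * R * mat_adjoint G \<in> carrier_mat D D" using mult_carrier_mat[OF GR Ga] .
  have "mtrace (C * \<rho> * mat_adjoint C) = (mtrace (W * \<rho> * mat_adjoint W) + mtrace (W * mat_adjoint G))
        + (mtrace (G * mat_adjoint W) + mtrace (G * R * mat_adjoint G))"
    unfolding eq using mtrace_add[OF addc[OF c1 c2] addc[OF c3 c4]]
      mtrace_add[OF c1 c2] mtrace_add[OF c3 c4] by simp
  moreover have "mtrace (W * mat_adjoint G) = cnj (mtrace (G * mat_adjoint W))"
    by (rule trace_adj_swap[OF G W])
  moreover have "0 \<le> Re (mtrace (C * \<rho> * mat_adjoint C))" by (rule psd_trace[OF psd C])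
  ultimately show ?thesis by simp
qed

lemma quad_b:
  fixes R \<rho> W G :: "complex mat"
  assumes psd: "psd_mat D \<rho>" and R: "R \<in> carrier_mat D D"
    and rR: "\<rho> * R = 1\<^sub>m D" and Rr: "R * \<rho> = 1\<^sub>m D"
    and W: "W \<in> carrier_mat D D" and G: "G \<in> carrier_mat D D"
  shows "0 \<le> Re (mtrace (mat_adjoint W * \<rho> * W)) + 2 * Re (mtrace (G * mat_adjoint W))
            + Re (mtrace (mat_adjoint G * R * G))"
proof -
  have rho: "\<rho> \<in> carrier_mat D D" and rh: "mat_adjoint \<rho> = \<rho>"
    using psd unfolding psd_mat_def hermitian_mat_def by auto
  have Rh: "mat_adjoint R = R" by (rule adjR[OF rho rh R rR])
  have Wa: "mat_adjoint W \<in> carrier_mat D D" and Ga: "mat_adjoint G \<in> carrier_mat D D" using W G by auto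
  have RG: "R * G \<in> carrier_mat D D" using mult_carrier_mat[OF R G] .
  have GaR: "mat_adjoint G * R \<in> carrier_mat D D" using mult_carrier_mat[OF Ga R] .
  have War: "mat_adjoint W * \<rho> \<in> carrier_mat D D" using mult_carrier_mat[OF Wa rho] .
  define C where "C = W + R * G"
  have C: "C \<in> carrier_mat D D" unfolding C_def using W RG by simp
  define Cd where "Cd = mat_adjoint C"
  have Cd: "Cd \<in> carrier_mat D D" unfolding Cd_def using C by simp
  have Cda: "mat_adjoint Cd = C" unfolding Cd_def by simp
  have Cde: "Cd = mat_adjoint W + mat_adjoint G * R"
    unfolding Cd_def C_def adj_add[OF W RG] adj_mult[OF R G] Rh ..
  have "Cd * \<rho> = mat_adjoint W * \<rho> + (mat_adjoint G * R) * \<rho>" unfolding Cde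
    by (rule add_mult_distrib_mat[OF Wa GaR rho])
  also have "(mat_adjoint G * R) * \<rho> = mat_adjoint G"
    using assoc_mult_mat[OF Ga R rho] Rr right_mult_one_mat[OF Ga] by simp
  finally have Cr: "Cd * \<rho> = mat_adjoint W * \<rho> + mat_adjoint G" .
  have "Cd * \<rho> * mat_adjoint Cd = (mat_adjoint W * \<rho> + mat_adjoint G) * (W + R * G)"
    unfolding Cr Cda C_def ..
  also have "\<dots> = (mat_adjoint W * \<rho> * W + mat_adjoint W * \<rho> * (R * G))
        + (mat_adjoint G * W + mat_adjoint G * (R * G))"
    using add_mult_distrib_mat[OF War Ga addc[OF W RG]]
      mult_add_distrib_mat[OF War W RG] mult_add_distrib_mat[OF Ga W RG] by simp
  also have "mat_adjoint W * \<rho> * (R * G) = mat_adjoint W * G"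
    using assoc_mult_mat[OF Wa rho RG] assoc_mult_mat[OF rho R G, symmetric] rR left_mult_one_mat[OF G]
    by simp
  also have "mat_adjoint G * (R * G) = mat_adjoint G * R * G"
    by (rule assoc_mult_mat[OF Ga R G, symmetric])
  finally have eq: "Cd * \<rho> * mat_adjoint Cd = (mat_adjoint W * \<rho> * W + mat_adjoint W * G)
        + (mat_adjoint G * W + mat_adjoint G * R * G)" .
  have c1: "mat_adjoint W * \<rho> * W \<in> carrier_mat D D" using mult_carrier_mat[OF War W] .
  have c2: "mat_adjoint W * G \<in> carrier_mat D D" using mult_carrier_mat[OF Wa G] .
  have c3: "mat_adjoint G * W \<in> carrier_mat D D" using mult_carrier_mat[OF Ga W] .
  have c4: "mat_adjoint G * R * G \<in> carrier_mat D D" using mult_carrier_mat[OF GaR G] .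
  have "mtrace (Cd * \<rho> * mat_adjoint Cd) = (mtrace (mat_adjoint W * \<rho> * W) + mtrace (mat_adjoint W * G))
        + (mtrace (mat_adjoint G * W) + mtrace (mat_adjoint G * R * G))"
    unfolding eq using mtrace_add[OF addc[OF c1 c2] addc[OF c3 c4]]
      mtrace_add[OF c1 c2] mtrace_add[OF c3 c4] by simp
  moreover have t2: "mtrace (mat_adjoint W * G) = mtrace (G * mat_adjoint W)"
    by (rule mtrace_cyclic[OF Wa G])
  moreover have "mtrace (mat_adjoint G * W) = cnj (mtrace (mat_adjoint W * G))"
    using trace_adj_swap[OF Wa Ga] by simp
  moreover have "0 \<le> Re (mtrace (Cd * \<rho> * mat_adjoint Cd))" by (rule psd_trace[OF psd Cd])
  ultimately show ?thesis by simp
qed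

lemma sum1: "(\<Sum>j\<in>{1..d}. f j) = (\<Sum>a<d. f (Suc a))"
  using sum.atLeast1_atMost_eq[of f d] by simp

lemma tr_sum: "(\<Sum>a<D. \<Sum>b<D. (\<Sum>k\<in>K. f k a b) * y b a) = (\<Sum>k\<in>K. \<Sum>a<D. \<Sum>b<D. f k a b * (y b a :: complex))"
proof -
  have "(\<Sum>a<D. \<Sum>b<D. (\<Sum>k\<in>K. f k a b) * y b a) = (\<Sum>a<D. \<Sum>b<D. \<Sum>k\<in>K. f k a b * y b a)"
    by (simp add: sum_distrib_right)
  also have "\<dots> = (\<Sum>a<D. \<Sum>k\<in>K. \<Sum>b<D. f k a b * y b a)"
    by (rule sum.cong[OF refl], rule sum.swap)
  also have "\<dots> = (\<Sum>k\<in>K. \<Sum>a<D. \<Sum>b<D. f k a b * y b a)"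
    by (rule sum.swap)
  finally show ?thesis .
qed

lemma tr_add: "(\<Sum>a<D. \<Sum>b<D. (f a b + g a b) * y b a) = (\<Sum>a<D. \<Sum>b<D. f a b * y b a) + (\<Sum>a<D. \<Sum>b<D. g a b * (y b a :: complex))"
  by (simp add: distrib_right sum.distrib)

lemma tr_scale: "(\<Sum>a<D. \<Sum>b<D. (c * f a b) * y b a) = c * (\<Sum>a<D. \<Sum>b<D. f a b * (y b a :: complex))"
  by (simp add: sum_distrib_left mult.assoc)

lemma Gamma_carrier: "Gamma D d rho0 drho z xi j \<in> carrier_mat D D"
  unfolding Gamma_def by simp

lemma Gamma_index: "a < D \<Longrightarrow> b < D \<Longrightarrow> Gamma D d rho0 drho z xi j $$ (a,b) =
     (\<Sum>k\<in>{1..d}. T_mat d $$ (k - 1, j - 1) *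
        ((\<Sum>l\<in>{0..d}. complex_of_real (z l k) * rho_l rho0 drho l $$ (a, b)) + \<i> * xi k $$ (a, b)))"
  unfolding Gamma_def by simp

lemma trace_Gamma_X:
  assumes rho: "rho0 \<in> carrier_mat D D" and drho: "\<forall>l\<in>{1..d}. drho l \<in> carrier_mat D D"
    and xi: "\<forall>k\<in>{1..d}. xi k \<in> carrier_mat D D" and Y: "Y \<in> carrier_mat D D"
    and tr0: "mtrace (rho0 * Y) = 0" and trd: "\<forall>l\<in>{1..d}. mtrace (drho l * Y) = (if l = m then 1 else 0)"
    and m: "m \<in> {1..d}"
  shows "mtrace (Gamma D d rho0 drho z xi j * Y) =
     (\<Sum>k\<in>{1..d}. T_mat d $$ (k - 1, j - 1) * (complex_of_real (z m k) + \<i> * mtrace (xi k * Y)))"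
proof -
  let ?T = "\<lambda>k. T_mat d $$ (k - 1, j - 1)"
  let ?r = "\<lambda>l. rho_l rho0 drho l"
  let ?y = "\<lambda>b a. Y $$ (b,a)"
  have rl: "\<And>l. l \<in> {0..d} \<Longrightarrow> ?r l \<in> carrier_mat D D"
    unfolding rho_l_def using rho drho by auto
  have trr: "\<And>l. l \<in> {0..d} \<Longrightarrow> mtrace (?r l * Y) = (if l = m then 1 else 0)"
    unfolding rho_l_def using tr0 trd m by auto
  have zs: "\<And>k. (\<Sum>l\<in>{0..d}. complex_of_real (z l k) * mtrace (?r l * Y)) = complex_of_real (z m k)"
  proof -
    fix k
    have "(\<Sum>l\<in>{0..d}. complex_of_real (z l k) * mtrace (?r l * Y))
        = (\<Sum>l\<in>{0..d}. if l = m then complex_of_real (z l k) else 0)"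
      by (rule sum.cong[OF refl]) (simp add: trr)
    also have "\<dots> = complex_of_real (z m k)" using m by simp
    finally show "(\<Sum>l\<in>{0..d}. complex_of_real (z l k) * mtrace (?r l * Y)) = complex_of_real (z m k)" .
  qed
  have G: "Gamma D d rho0 drho z xi j \<in> carrier_mat D D" by (rule Gamma_carrier)
  have "mtrace (Gamma D d rho0 drho z xi j * Y) = (\<Sum>a<D. \<Sum>b<D. Gamma D d rho0 drho z xi j $$ (a,b) * ?y b a)"
    by (rule mtrace_mult[OF G Y])
  also have "\<dots> = (\<Sum>a<D. \<Sum>b<D. (\<Sum>k\<in>{1..d}. ?T k * ((\<Sum>l\<in>{0..d}. complex_of_real (z l k) * ?r l $$ (a, b))
        + \<i> * xi k $$ (a, b))) * ?y b a)"
    by (intro sum.cong refl) (simp add: Gamma_index)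
  also have "\<dots> = (\<Sum>k\<in>{1..d}. \<Sum>a<D. \<Sum>b<D. (?T k * ((\<Sum>l\<in>{0..d}. complex_of_real (z l k) * ?r l $$ (a, b))
        + \<i> * xi k $$ (a, b))) * ?y b a)"
    by (rule tr_sum)
  also have "\<dots> = (\<Sum>k\<in>{1..d}. ?T k * ((\<Sum>l\<in>{0..d}. complex_of_real (z l k) * (\<Sum>a<D. \<Sum>b<D. ?r l $$ (a, b) * ?y b a))
        + \<i> * (\<Sum>a<D. \<Sum>b<D. xi k $$ (a, b) * ?y b a)))"
  proof (rule sum.cong[OF refl])
    fix k
    show "(\<Sum>a<D. \<Sum>b<D. (?T k * ((\<Sum>l\<in>{0..d}. complex_of_real (z l k) * ?r l $$ (a, b))
        + \<i> * xi k $$ (a, b))) * ?y b a) = ?T k * ((\<Sum>l\<in>{0..d}. complex_of_real (z l k) * (\<Sum>a<D. \<Sum>b<D. ?r l $$ (a, b) * ?y b a))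
        + \<i> * (\<Sum>a<D. \<Sum>b<D. xi k $$ (a, b) * ?y b a))"
      unfolding tr_scale tr_add tr_sum by simp
  qed
  also have "\<dots> = (\<Sum>k\<in>{1..d}. ?T k * (complex_of_real (z m k) + \<i> * mtrace (xi k * Y)))"
  proof (rule sum.cong[OF refl])
    fix k assume k: "k \<in> {1..d}"
    have "(\<Sum>l\<in>{0..d}. complex_of_real (z l k) * (\<Sum>a<D. \<Sum>b<D. ?r l $$ (a, b) * ?y b a))
        = (\<Sum>l\<in>{0..d}. complex_of_real (z l k) * mtrace (?r l * Y))"
      by (rule sum.cong[OF refl]) (simp add: mtrace_mult[OF rl Y])
    also have "\<dots> = complex_of_real (z m k)" by (rule zs)
    finally show "?T k * ((\<Sum>l\<in>{0..d}. complex_of_real (z l k) * (\<Sum>a<D. \<Sum>b<D. ?r l $$ (a, b) * ?y b a))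
        + \<i> * (\<Sum>a<D. \<Sum>b<D. xi k $$ (a, b) * ?y b a)) = ?T k * (complex_of_real (z m k) + \<i> * mtrace (xi k * Y))"
      using mtrace_mult[of "xi k" D D Y] xi k Y by simp
  qed
  finally show ?thesis .
qed

lemma rearr: "(\<Sum>j\<in>J. \<Sum>m\<in>M. s j m * (\<Sum>k\<in>K. t k j * f m k)) = (\<Sum>m\<in>M. \<Sum>k\<in>K. (\<Sum>j\<in>J. t k j * s j m) * (f m k :: complex))"
proof -
  have "(\<Sum>j\<in>J. \<Sum>m\<in>M. s j m * (\<Sum>k\<in>K. t k j * f m k)) = (\<Sum>j\<in>J. \<Sum>m\<in>M. \<Sum>k\<in>K. t k j * s j m * f m k)"
    by (simp add: sum_distrib_left mult_ac)
  also have "\<dots> = (\<Sum>m\<in>M. \<Sum>j\<in>J. \<Sum>k\<in>K. t k j * s j m * f m k)" by (rule sum.swap)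
  also have "\<dots> = (\<Sum>m\<in>M. \<Sum>k\<in>K. \<Sum>j\<in>J. t k j * s j m * f m k)" by (rule sum.cong[OF refl], rule sum.swap)
  also have "\<dots> = (\<Sum>m\<in>M. \<Sum>k\<in>K. (\<Sum>j\<in>J. t k j * s j m) * f m k)" by (simp add: sum_distrib_right)
  finally show ?thesis .
qed

lemma TS_sum:
  assumes d: "2 \<le> d" and k: "k \<in> {1..d}" and m: "m \<in> {1..d}"
  shows "(\<Sum>j\<in>{1..d}. T_mat d $$ (k - 1, j - 1) * S_mat d $$ (j - 1, m - 1)) = (if k = m then 1 else 0)"
proof -
  have T: "T_mat d \<in> carrier_mat d d" and TS: "T_mat d * S_mat d = 1\<^sub>m d" using T_S[OF d] by auto
  have k': "k - 1 < d" and m': "m - 1 < d" using k m by auto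
  have "(\<Sum>j\<in>{1..d}. T_mat d $$ (k - 1, j - 1) * S_mat d $$ (j - 1, m - 1)) = (\<Sum>a<d. T_mat d $$ (k - 1, a) * S_mat d $$ (a, m - 1))"
    unfolding sum1 by simp
  also have "\<dots> = (T_mat d * S_mat d) $$ (k - 1, m - 1)"
    using mult_entry[OF T S_carrier k' m'] by simp
  also have "\<dots> = (if k = m then 1 else 0)" unfolding TS using k m by auto
  finally show ?thesis .
qed

lemma trace_herm_real:
  assumes A: "hermitian_mat D A" and B: "hermitian_mat D B"
  shows "Im (mtrace (A * B)) = 0"
proof -
  have Ac: "A \<in> carrier_mat D D" and Ah: "mat_adjoint A = A" using A unfolding hermitian_mat_def by auto
  have Bc: "B \<in> carrier_mat D D" and Bh: "mat_adjoint B = B" using B unfolding hermitian_mat_def by auto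
  have "cnj (mtrace (A * B)) = mtrace (mat_adjoint (A * B))" using mtrace_adj[OF mult_carrier_mat[OF Ac Bc]] by simp
  also have "\<dots> = mtrace (B * A)" unfolding adj_mult[OF Ac Bc] Ah Bh ..
  also have "\<dots> = mtrace (A * B)" by (rule mtrace_cyclic[OF Bc Ac])
  finally have "cnj (mtrace (A * B)) = mtrace (A * B)" .
  then show ?thesis by (simp add: complex_eq_iff)
qed

lemma S_row_sum:
  assumes d: "2 \<le> d" and j: "j \<in> {1..d}"
  shows "(\<Sum>m\<in>{1..d}. S_mat d $$ (j - 1, m - 1) * h m) = h j + scf d (j - 1) * h (Suc (nxt d (j - 1)))"
proof -
  define i where "i = j - 1"
  have j': "i < d" and ji: "j = Suc i" using j unfolding i_def by auto
  have "(\<Sum>m\<in>{1..d}. S_mat d $$ (j - 1, m - 1) * h m) = (\<Sum>a<d. S_mat d $$ (i, a) * h (Suc a))"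
    unfolding sum1 i_def by simp
  also have "\<dots> = (\<Sum>a<d. (if a = i then 1 else if a = nxt d i then scf d i else 0) * h (Suc a))"
    by (rule sum.cong[OF refl]) (simp add: S_entry[OF d j'])
  also have "\<dots> = h (Suc i) + scf d i * h (Suc (nxt d i))"
    by (rule sum_two_delta[where f = "\<lambda>a. h (Suc a)"]) (use j' nxt_less[OF j'] nxt_neq[OF d j'] in auto)
  finally show ?thesis unfolding ji by simp
qed

lemma lin_total:
  assumes d: "2 \<le> d" and rho: "rho0 \<in> carrier_mat D D"
    and drho: "\<forall>l\<in>{1..d}. drho l \<in> carrier_mat D D"
    and xi: "\<forall>k\<in>{1..d}. hermitian_mat D (xi k)"
    and feas: "holevo_feasible D d rho0 drho X"
  shows "(\<Sum>j\<in>{1..d}. Re (mtrace (Gamma D d rho0 drho z xi j *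
            (X j + scf d (j - 1) \<cdot>\<^sub>m X (Suc (nxt d (j - 1))))))) = (\<Sum>j\<in>{1..d}. z j j)"
proof -
  let ?G = "\<lambda>j. Gamma D d rho0 drho z xi j"
  let ?T = "\<lambda>k j. T_mat d $$ (k - 1, j - 1)"
  let ?S = "\<lambda>j m. S_mat d $$ (j - 1, m - 1)"
  let ?F = "\<lambda>m k. complex_of_real (z m k) + \<i> * mtrace (xi k * X m)"
  have Xh: "\<And>j. j \<in> {1..d} \<Longrightarrow> hermitian_mat D (X j)" using feas unfolding holevo_feasible_def by auto
  have Xc: "\<And>j. j \<in> {1..d} \<Longrightarrow> X j \<in> carrier_mat D D" using Xh unfolding hermitian_mat_def by auto
  have xic: "\<forall>k\<in>{1..d}. xi k \<in> carrier_mat D D" using xi unfolding hermitian_mat_def by auto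
  have trGX: "\<And>j m. m \<in> {1..d} \<Longrightarrow> mtrace (?G j * X m) = (\<Sum>k\<in>{1..d}. ?T k j * ?F m k)"
  proof -
    fix j m assume m: "m \<in> {1..d}"
    show "mtrace (?G j * X m) = (\<Sum>k\<in>{1..d}. ?T k j * ?F m k)"
      by (rule trace_Gamma_X[OF rho drho xic Xc[OF m] _ _ m])
        (use feas m in \<open>auto simp: holevo_feasible_def\<close>)
  qed
  have Lj: "\<And>j. j \<in> {1..d} \<Longrightarrow> mtrace (?G j * (X j + scf d (j - 1) \<cdot>\<^sub>m X (Suc (nxt d (j - 1)))))
        = (\<Sum>m\<in>{1..d}. ?S j m * mtrace (?G j * X m))"
  proof -
    fix j assume j: "j \<in> {1..d}"
    let ?n = "Suc (nxt d (j - 1))"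
    have j1: "j - 1 < d" using j by auto
    have n: "?n \<in> {1..d}" using nxt_less[OF j1] by auto
    have G: "?G j \<in> carrier_mat D D" by (rule Gamma_carrier)
    have "mtrace (?G j * (X j + scf d (j - 1) \<cdot>\<^sub>m X ?n)) = mtrace (?G j * X j + scf d (j - 1) \<cdot>\<^sub>m (?G j * X ?n))"
      using mult_add_distrib_mat[OF G Xc[OF j] smult_carrier_mat[OF Xc[OF n]]] mult_smult_distrib[OF G Xc[OF n]]
      by simp
    also have "\<dots> = mtrace (?G j * X j) + scf d (j - 1) * mtrace (?G j * X ?n)"
      using mtrace_add[OF mult_carrier_mat[OF G Xc[OF j]] smult_carrier_mat[OF mult_carrier_mat[OF G Xc[OF n]]]]
        mtrace_smult[OF mult_carrier_mat[OF G Xc[OF n]]] by simp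
    also have "\<dots> = (\<Sum>m\<in>{1..d}. ?S j m * mtrace (?G j * X m))"
      by (rule S_row_sum[OF d j, symmetric])
    finally show "mtrace (?G j * (X j + scf d (j - 1) \<cdot>\<^sub>m X ?n)) = (\<Sum>m\<in>{1..d}. ?S j m * mtrace (?G j * X m))" .
  qed
  have "(\<Sum>j\<in>{1..d}. mtrace (?G j * (X j + scf d (j - 1) \<cdot>\<^sub>m X (Suc (nxt d (j - 1))))))
      = (\<Sum>j\<in>{1..d}. \<Sum>m\<in>{1..d}. ?S j m * (\<Sum>k\<in>{1..d}. ?T k j * ?F m k))"
  proof (rule sum.cong[OF refl])
    fix j assume j: "j \<in> {1..d}"
    have "mtrace (?G j * (X j + scf d (j - 1) \<cdot>\<^sub>m X (Suc (nxt d (j - 1)))))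
        = (\<Sum>m\<in>{1..d}. ?S j m * mtrace (?G j * X m))" by (rule Lj[OF j])
    also have "\<dots> = (\<Sum>m\<in>{1..d}. ?S j m * (\<Sum>k\<in>{1..d}. ?T k j * ?F m k))"
      by (rule sum.cong[OF refl]) (simp only: trGX)
    finally show "mtrace (?G j * (X j + scf d (j - 1) \<cdot>\<^sub>m X (Suc (nxt d (j - 1)))))
        = (\<Sum>m\<in>{1..d}. ?S j m * (\<Sum>k\<in>{1..d}. ?T k j * ?F m k))" .
  qed
  also have "\<dots> = (\<Sum>m\<in>{1..d}. \<Sum>k\<in>{1..d}. (\<Sum>j\<in>{1..d}. ?T k j * ?S j m) * ?F m k)"
    by (rule rearr)
  also have "\<dots> = (\<Sum>m\<in>{1..d}. \<Sum>k\<in>{1..d}. (if k = m then ?F m k else 0))"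
    by (intro sum.cong refl) (simp only: TS_sum[OF d], simp)
  also have "\<dots> = (\<Sum>m\<in>{1..d}. ?F m m)" by simp
  finally have tot: "(\<Sum>j\<in>{1..d}. mtrace (?G j * (X j + scf d (j - 1) \<cdot>\<^sub>m X (Suc (nxt d (j - 1))))))
      = (\<Sum>m\<in>{1..d}. ?F m m)" .
  have "(\<Sum>j\<in>{1..d}. Re (mtrace (?G j * (X j + scf d (j - 1) \<cdot>\<^sub>m X (Suc (nxt d (j - 1)))))))
     = Re (\<Sum>m\<in>{1..d}. ?F m m)" unfolding tot[symmetric] Re_sum ..
  also have "\<dots> = (\<Sum>m\<in>{1..d}. z m m)" unfolding Re_sum
    by (rule sum.cong[OF refl]) (simp add: trace_herm_real[OF _ Xh] xi)
  finally show ?thesis .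
qed

lemma tr3: "P \<in> carrier_mat D D \<Longrightarrow> M \<in> carrier_mat D D \<Longrightarrow> Q \<in> carrier_mat D D \<Longrightarrow>
  mtrace (P * M * Q) = (\<Sum>i<D. \<Sum>l<D. \<Sum>k<D. P $$ (i,k) * M $$ (k,l) * Q $$ (l,i))"
proof -
  assume P: "P \<in> carrier_mat D D" and M: "M \<in> carrier_mat D D" and Q: "Q \<in> carrier_mat D D"
  have PM: "P * M \<in> carrier_mat D D" using mult_carrier_mat[OF P M] .
  have "mtrace (P * M * Q) = (\<Sum>i<D. \<Sum>l<D. (P * M) $$ (i,l) * Q $$ (l,i))" by (rule mtrace_mult[OF PM Q])
  also have "\<dots> = (\<Sum>i<D. \<Sum>l<D. (\<Sum>k<D. P $$ (i,k) * M $$ (k,l)) * Q $$ (l,i))"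
    by (intro sum.cong refl) (simp only: mult_entry[OF P M] lessThan_iff)
  also have "\<dots> = (\<Sum>i<D. \<Sum>l<D. \<Sum>k<D. P $$ (i,k) * M $$ (k,l) * Q $$ (l,i))"
    by (simp add: sum_distrib_right)
  finally show ?thesis .
qed

lemma expand4:
  fixes A B M :: "complex mat"
  assumes A: "A \<in> carrier_mat D D" and B: "B \<in> carrier_mat D D" and M: "M \<in> carrier_mat D D"
  shows "mtrace ((A + a \<cdot>\<^sub>m B) * M * (A + b \<cdot>\<^sub>m B)) = mtrace (A * M * A) + b * mtrace (A * M * B)
     + a * mtrace (B * M * A) + a * b * mtrace (B * M * B)"
proof -
  have P: "A + a \<cdot>\<^sub>m B \<in> carrier_mat D D" and Q: "A + b \<cdot>\<^sub>m B \<in> carrier_mat D D" using A B by auto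
  have "mtrace ((A + a \<cdot>\<^sub>m B) * M * (A + b \<cdot>\<^sub>m B)) = (\<Sum>i<D. \<Sum>l<D. \<Sum>k<D.
      (A $$ (i,k) + a * B $$ (i,k)) * M $$ (k,l) * (A $$ (l,i) + b * B $$ (l,i)))"
    unfolding tr3[OF P M Q] using A B by (intro sum.cong refl) auto
  also have "\<dots> = mtrace (A * M * A) + b * mtrace (A * M * B)
     + a * mtrace (B * M * A) + a * b * mtrace (B * M * B)"
    unfolding tr3[OF A M A] tr3[OF A M B] tr3[OF B M A] tr3[OF B M B]
    by (simp add: algebra_simps sum.distrib sum_distrib_left)
  finally show ?thesis .
qed

lemma tr_cyc3: "A \<in> carrier_mat D D \<Longrightarrow> B \<in> carrier_mat D D \<Longrightarrow> C \<in> carrier_mat D D \<Longrightarrow>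
  mtrace (A * B * C) = mtrace (B * C * A)"
proof -
  assume A: "A \<in> carrier_mat D D" and B: "B \<in> carrier_mat D D" and C: "C \<in> carrier_mat D D"
  have "mtrace ((A * B) * C) = mtrace (C * (A * B))" by (rule mtrace_cyclic[OF mult_carrier_mat[OF A B] C])
  also have "C * (A * B) = (C * A) * B" by (rule assoc_mult_mat[OF C A B, symmetric])
  also have "mtrace ((C * A) * B) = mtrace (B * (C * A))" by (rule mtrace_cyclic[OF mult_carrier_mat[OF C A] B])
  also have "B * (C * A) = B * C * A" by (rule assoc_mult_mat[OF B C A, symmetric])
  finally show ?thesis .
qed

lemma Z_herm:
  assumes rho: "hermitian_mat D rho0" and P: "hermitian_mat D P" and Q: "hermitian_mat D Q"
  shows "cnj (mtrace (rho0 * P * Q)) = mtrace (rho0 * Q * P)"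
proof -
  have r: "rho0 \<in> carrier_mat D D" "mat_adjoint rho0 = rho0" using rho unfolding hermitian_mat_def by auto
  have p: "P \<in> carrier_mat D D" "mat_adjoint P = P" using P unfolding hermitian_mat_def by auto
  have q: "Q \<in> carrier_mat D D" "mat_adjoint Q = Q" using Q unfolding hermitian_mat_def by auto
  have "cnj (mtrace (rho0 * P * Q)) = mtrace (mat_adjoint (rho0 * P * Q))"
    using mtrace_adj[of "rho0 * P * Q" D] r p q by simp
  also have "mat_adjoint (rho0 * P * Q) = Q * (P * rho0)"
    using adj_mult[OF mult_carrier_mat[OF r(1) p(1)] q(1)] adj_mult[OF r(1) p(1)] r p q by simp
  also have "mtrace (Q * (P * rho0)) = mtrace (Q * P * rho0)"
    using assoc_mult_mat[OF q(1) p(1) r(1)] by simp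
  also have "\<dots> = mtrace (rho0 * Q * P)" using tr_cyc3[OF q(1) p(1) r(1)] tr_cyc3[OF p(1) r(1) q(1)] by simp
  finally show ?thesis .
qed

lemma Re4: "Re (a + b + c + e) = Re a + Re b + Re c + Re e" by simp

lemma re_q_a:
  fixes c w :: complex
  assumes "Re c = 0" "cnj c * c = 1"
  shows "Re (zjj + c * cnj w + cnj c * w + cnj c * c * znn) = Re zjj + Re znn + 2 * Im c * Im w"
proof -
  have h1: "cnj c * c * znn = znn" using assms(2) by simp
  moreover have h2: "Re (c * cnj w) = Im c * Im w" using assms(1) by simp
  moreover have h3: "Re (cnj c * w) = Im c * Im w" using assms(1) by simp
  show ?thesis unfolding Re4 h1 h2 h3 by simp
qed

lemma re_q_b:
  fixes c w :: complex
  assumes "Re c = 0" "cnj c * c = 1"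
  shows "Re (zjj + cnj c * cnj w + c * w + c * cnj c * znn) = Re zjj + Re znn - 2 * Im c * Im w"
proof -
  have h1: "c * cnj c * znn = znn" using assms(2) by (simp add: mult.commute)
  moreover have h2: "Re (cnj c * cnj w) = - Im c * Im w" using assms(1) by simp
  moreover have h3: "Re (c * w) = - Im c * Im w" using assms(1) by simp
  show ?thesis unfolding Re4 h1 h2 h3 by simp
qed

lemma scf_props: "Re (scf d a) = 0" "cnj (scf d a) * scf d a = 1" "Im (scf d a) = 1 \<or> Im (scf d a) = -1"
  unfolding scf_def by auto

lemma nxt_inj: "inj_on (nxt d) {..<d}"
  unfolding inj_on_def nxt_def by auto

lemma nxt_bij: "bij_betw (nxt d) {..<d} {..<d}"
proof -
  have "nxt d ` {..<d} \<subseteq> {..<d}" using nxt_less by auto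
  then have "nxt d ` {..<d} = {..<d}" using endo_inj_surj[OF _ _ nxt_inj] by auto
  then show ?thesis using nxt_inj unfolding bij_betw_def by auto
qed

lemma sum_nxt: "(\<Sum>a<d. f (nxt d a)) = (\<Sum>a<d. f a)"
  by (rule sum.reindex_bij_betw[OF nxt_bij])

definition Umat :: "nat \<Rightarrow> (nat \<Rightarrow> real) \<Rightarrow> complex mat" where
  "Umat d t = mat d d (\<lambda>(b,a). if b = nxt d a then complex_of_real (t a) else 0)"

lemma U_carrier: "Umat d t \<in> carrier_mat d d" unfolding Umat_def by simp

lemma U_unitary:
  assumes tt: "\<forall>a<d. t a = 1 \<or> t a = -1"
  shows "Umat d t * mat_adjoint (Umat d t) = 1\<^sub>m d"
proof -
  let ?U = "Umat d t"
  have U: "?U \<in> carrier_mat d d" by (rule U_carrier)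
  have Ua: "mat_adjoint ?U \<in> carrier_mat d d" using U by simp
  have "mat_adjoint ?U * ?U = 1\<^sub>m d"
  proof (rule eq_matI)
    fix p q assume p: "p < dim_row (1\<^sub>m d :: complex mat)" and q: "q < dim_col (1\<^sub>m d :: complex mat)"
    then have p: "p < d" and q: "q < d" by auto
    have "(mat_adjoint ?U * ?U) $$ (p,q) = (\<Sum>b<d. mat_adjoint ?U $$ (p,b) * ?U $$ (b,q))"
      by (rule mult_entry[OF Ua U p q])
    also have "\<dots> = (\<Sum>b<d. (if b = nxt d p then complex_of_real (t p) * ?U $$ (b,q) else 0))"
      by (rule sum.cong[OF refl]) (use U p in \<open>auto simp: Umat_def\<close>)
    also have "\<dots> = complex_of_real (t p) * ?U $$ (nxt d p, q)" using nxt_less[OF p] by simp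
    also have "\<dots> = (if p = q then 1 else 0)"
    proof (cases "p = q")
      case True
      then show ?thesis using tt p nxt_less[OF p] unfolding Umat_def
        by (auto simp flip: of_real_mult)
    next
      case False
      then have "nxt d p \<noteq> nxt d q" using nxt_inj[of d] p q unfolding inj_on_def by auto
      then show ?thesis using False nxt_less[OF p] q unfolding Umat_def by auto
    qed
    also have "\<dots> = 1\<^sub>m d $$ (p,q)" using p q by simp
    finally show "(mat_adjoint ?U * ?U) $$ (p,q) = 1\<^sub>m d $$ (p,q)" .
  qed (use U in auto)
  then show ?thesis using mat_mult_left_right_inverse[OF Ua U] by simp
qed

lemma trace_JU:
  assumes J: "J \<in> carrier_mat d d"
  shows "mtrace (J * Umat d t) = (\<Sum>a<d. J $$ (a, nxt d a) * complex_of_real (t a))"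
proof -
  have "mtrace (J * Umat d t) = (\<Sum>a<d. \<Sum>b<d. J $$ (a,b) * Umat d t $$ (b,a))"
    by (rule mtrace_mult[OF J U_carrier])
  also have "\<dots> = (\<Sum>a<d. \<Sum>b<d. if b = nxt d a then J $$ (a,b) * complex_of_real (t a) else 0)"
    by (intro sum.cong refl) (auto simp: Umat_def)
  also have "\<dots> = (\<Sum>a<d. J $$ (a, nxt d a) * complex_of_real (t a))"
    by (rule sum.cong[OF refl]) (use nxt_less in auto)
  finally show ?thesis .
qed

lemma classical_bound:
  assumes feas: "holevo_feasible D d rho0 drho X"
    and tt: "\<forall>j\<in>{1..d}. t j = 1 \<or> t j = -1"
  shows "(\<Sum>j\<in>{1..d}. Re (mtrace (rho0 * X j * X j)))
       + (\<Sum>j\<in>{1..d}. t j * Im (mtrace (rho0 * X j * X (Suc (nxt d (j - 1))))))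
       \<le> holevo_objective d rho0 X"
proof -
  let ?Z = "Z_mat d rho0 X"
  have Zi: "\<And>a b. a < d \<Longrightarrow> b < d \<Longrightarrow> ?Z $$ (a,b) = mtrace (rho0 * X (Suc a) * X (Suc b))"
    unfolding Z_mat_def by simp
  have J: "Im_mat ?Z \<in> carrier_mat d d" unfolding Im_mat_def Z_mat_def by simp
  have "Re (mtrace (Re_mat ?Z)) = (\<Sum>a<d. Re (?Z $$ (a,a)))"
    unfolding mtrace_def Re_mat_def Z_mat_def Re_sum by simp
  also have "\<dots> = (\<Sum>j\<in>{1..d}. Re (mtrace (rho0 * X j * X j)))"
    unfolding sum1 by (rule sum.cong[OF refl]) (simp add: Zi)
  finally have tr1: "Re (mtrace (Re_mat ?Z)) = (\<Sum>j\<in>{1..d}. Re (mtrace (rho0 * X j * X j)))" .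
  let ?t = "\<lambda>a. t (Suc a)"
  have tt': "\<forall>a<d. ?t a = 1 \<or> ?t a = -1" using tt by auto
  have "Re (mtrace (Im_mat ?Z * Umat d ?t)) = (\<Sum>a<d. Re (Im_mat ?Z $$ (a, nxt d a) * complex_of_real (?t a)))"
    unfolding trace_JU[OF J] Re_sum ..
  also have "\<dots> = (\<Sum>j\<in>{1..d}. t j * Im (mtrace (rho0 * X j * X (Suc (nxt d (j - 1))))))"
    unfolding sum1 by (rule sum.cong[OF refl]) (use nxt_less in \<open>simp add: Zi Im_mat_def Z_mat_def\<close>)
  finally have tr2: "Re (mtrace (Im_mat ?Z * Umat d ?t)) = (\<Sum>j\<in>{1..d}. t j * Im (mtrace (rho0 * X j * X (Suc (nxt d (j - 1))))))" .
  have "Re (mtrace (Im_mat ?Z * Umat d ?t)) \<le> trace_norm (Im_mat ?Z)"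
    by (rule trace_norm_ge[OF J U_carrier U_unitary[OF tt']])
  then show ?thesis unfolding holevo_objective_def using tr1 tr2 by simp
qed

lemma core:
  assumes d: "2 \<le> d" and psd: "psd_mat D rho0"
    and R: "minv rho0 \<in> carrier_mat D D" and rR: "rho0 * minv rho0 = 1\<^sub>m D" and Rr: "minv rho0 * rho0 = 1\<^sub>m D"
    and drho: "\<forall>l\<in>{1..d}. drho l \<in> carrier_mat D D"
    and xi: "\<forall>k\<in>{1..d}. hermitian_mat D (xi k)"
    and feas: "holevo_feasible D d rho0 drho X"
  shows "g_alpha D d rho0 drho \<alpha> z xi \<le> holevo_objective d rho0 X"
proof -
  let ?R = "minv rho0"
  let ?G = "\<lambda>j. Gamma D d rho0 drho z xi j"
  let ?n = "\<lambda>j. Suc (nxt d (j - 1))"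
  let ?c = "\<lambda>j. scf d (j - 1)"
  let ?ab = "\<lambda>j. alpha_bar d \<alpha> j"
  let ?Z1 = "\<lambda>p q. mtrace (rho0 * X p * X q)"
  define W where "W = (\<lambda>j. X j + cnj (?c j) \<cdot>\<^sub>m X (?n j))"
  define Gt where "Gt = (\<lambda>j. if \<not> ?ab j then Re (mtrace (?G j * ?R * mat_adjoint (?G j)))
        else Re (mtrace (mat_adjoint (?G j) * ?R * ?G j)))"
  define q where "q = (\<lambda>j. if \<not> ?ab j then Re (mtrace (W j * rho0 * mat_adjoint (W j)))
        else Re (mtrace (mat_adjoint (W j) * rho0 * W j)))"
  define L where "L = (\<lambda>j. Re (mtrace (?G j * mat_adjoint (W j))))"
  define tau where "tau = (\<lambda>j. if \<not> ?ab j then Im (?c j) else - Im (?c j))"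
  have rho: "rho0 \<in> carrier_mat D D" and rhoh: "hermitian_mat D rho0"
    using psd unfolding psd_mat_def hermitian_mat_def by auto
  have Xh: "\<And>j. j \<in> {1..d} \<Longrightarrow> hermitian_mat D (X j)" using feas unfolding holevo_feasible_def by auto
  have Xc: "\<And>j. j \<in> {1..d} \<Longrightarrow> X j \<in> carrier_mat D D" using Xh unfolding hermitian_mat_def by auto
  have Xa: "\<And>j. j \<in> {1..d} \<Longrightarrow> mat_adjoint (X j) = X j" using Xh unfolding hermitian_mat_def by auto
  have n: "\<And>j. j \<in> {1..d} \<Longrightarrow> ?n j \<in> {1..d}"
  proof -
    fix j assume j: "j \<in> {1..d}"
    then have j1: "j - 1 < d" by auto
    show "?n j \<in> {1..d}" using nxt_less[OF j1] by auto
  qed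
  have Wc: "\<And>j. j \<in> {1..d} \<Longrightarrow> W j \<in> carrier_mat D D" unfolding W_def using Xc n by auto
  have Wa: "\<And>j. j \<in> {1..d} \<Longrightarrow> mat_adjoint (W j) = X j + ?c j \<cdot>\<^sub>m X (?n j)"
    unfolding W_def using adj_add[OF Xc smult_carrier_mat[OF Xc]] adj_smult Xa n by simp
  have Gc: "\<And>j. ?G j \<in> carrier_mat D D" by (rule Gamma_carrier)
  have per: "\<And>j. j \<in> {1..d} \<Longrightarrow> 0 \<le> q j + 2 * L j + Gt j"
  proof -
    fix j assume j: "j \<in> {1..d}"
    show "0 \<le> q j + 2 * L j + Gt j"
    proof (cases "?ab j")
      case False
      then show ?thesis unfolding q_def L_def Gt_def using quad_a[OF psd R rR Rr Wc[OF j] Gc] by simp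
    next
      case True
      then show ?thesis unfolding q_def L_def Gt_def using quad_b[OF psd R rR Rr Wc[OF j] Gc] by simp
    qed
  qed
  have sumL: "(\<Sum>j\<in>{1..d}. L j) = (\<Sum>j\<in>{1..d}. z j j)"
  proof -
    have "(\<Sum>j\<in>{1..d}. L j) = (\<Sum>j\<in>{1..d}. Re (mtrace (?G j * (X j + ?c j \<cdot>\<^sub>m X (?n j)))))"
      unfolding L_def by (rule sum.cong[OF refl]) (simp only: Wa)
    also have "\<dots> = (\<Sum>j\<in>{1..d}. z j j)"
      by (rule lin_total[OF d rho drho xi feas])
    finally show ?thesis .
  qed
  have qZ: "\<And>j. j \<in> {1..d} \<Longrightarrow> q j = Re (?Z1 j j) + Re (?Z1 (?n j) (?n j)) + 2 * tau j * Im (?Z1 j (?n j))"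
  proof -
    fix j assume j: "j \<in> {1..d}"
    have nj: "?n j \<in> {1..d}" by (rule n[OF j])
    have A: "X j \<in> carrier_mat D D" using Xc[OF j] .
    have B: "X (?n j) \<in> carrier_mat D D" using Xc[OF nj] .
    have t11: "mtrace (X j * rho0 * X j) = ?Z1 j j" using tr_cyc3[OF A rho A] by simp
    have t12: "mtrace (X j * rho0 * X (?n j)) = cnj (?Z1 j (?n j))"
      using tr_cyc3[OF A rho B] Z_herm[OF rhoh Xh[OF j] Xh[OF nj]] by simp
    have t21: "mtrace (X (?n j) * rho0 * X j) = ?Z1 j (?n j)" using tr_cyc3[OF B rho A] by simp
    have t22: "mtrace (X (?n j) * rho0 * X (?n j)) = ?Z1 (?n j) (?n j)" using tr_cyc3[OF B rho B] by simp
    have sp: "Re (?c j) = 0" "cnj (?c j) * ?c j = 1" using scf_props by auto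
    show "q j = Re (?Z1 j j) + Re (?Z1 (?n j) (?n j)) + 2 * tau j * Im (?Z1 j (?n j))"
    proof (cases "?ab j")
      case False
      have "q j = Re (mtrace ((X j + cnj (?c j) \<cdot>\<^sub>m X (?n j)) * rho0 * (X j + ?c j \<cdot>\<^sub>m X (?n j))))"
        unfolding q_def using False Wa[OF j] by (simp add: W_def)
      also have "\<dots> = Re (?Z1 j j + ?c j * cnj (?Z1 j (?n j)) + cnj (?c j) * ?Z1 j (?n j) + cnj (?c j) * ?c j * ?Z1 (?n j) (?n j))"
        unfolding expand4[OF A B rho] t11 t12 t21 t22 ..
      also have "\<dots> = Re (?Z1 j j) + Re (?Z1 (?n j) (?n j)) + 2 * Im (?c j) * Im (?Z1 j (?n j))"
        by (rule re_q_a[OF sp])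
      finally show ?thesis unfolding tau_def using False by simp
    next
      case True
      have "q j = Re (mtrace ((X j + ?c j \<cdot>\<^sub>m X (?n j)) * rho0 * (X j + cnj (?c j) \<cdot>\<^sub>m X (?n j))))"
        unfolding q_def using True Wa[OF j] by (simp add: W_def)
      also have "\<dots> = Re (?Z1 j j + cnj (?c j) * cnj (?Z1 j (?n j)) + ?c j * ?Z1 j (?n j) + ?c j * cnj (?c j) * ?Z1 (?n j) (?n j))"
        unfolding expand4[OF A B rho] t11 t12 t21 t22 ..
      also have "\<dots> = Re (?Z1 j j) + Re (?Z1 (?n j) (?n j)) - 2 * Im (?c j) * Im (?Z1 j (?n j))"
        by (rule re_q_b[OF sp])
      finally show ?thesis unfolding tau_def using True by simp
    qed
  qed
  have reidx: "(\<Sum>j\<in>{1..d}. Re (?Z1 (?n j) (?n j))) = (\<Sum>j\<in>{1..d}. Re (?Z1 j j))"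
    unfolding sum1 using sum_nxt[of "\<lambda>a. Re (?Z1 (Suc a) (Suc a))" d] by simp
  have sumq: "(\<Sum>j\<in>{1..d}. q j) = 2 * ((\<Sum>j\<in>{1..d}. Re (?Z1 j j)) + (\<Sum>j\<in>{1..d}. tau j * Im (?Z1 j (?n j))))"
  proof -
    have "(\<Sum>j\<in>{1..d}. q j) = (\<Sum>j\<in>{1..d}. Re (?Z1 j j) + Re (?Z1 (?n j) (?n j)) + 2 * tau j * Im (?Z1 j (?n j)))"
      by (rule sum.cong[OF refl]) (rule qZ)
    also have "\<dots> = (\<Sum>j\<in>{1..d}. Re (?Z1 j j)) + (\<Sum>j\<in>{1..d}. Re (?Z1 (?n j) (?n j))) + 2 * (\<Sum>j\<in>{1..d}. tau j * Im (?Z1 j (?n j)))"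
      by (simp add: sum.distrib sum_distrib_left mult.assoc)
    finally show ?thesis unfolding reidx by simp
  qed
  have tt: "\<forall>j\<in>{1..d}. tau j = 1 \<or> tau j = -1" unfolding tau_def using scf_props(3) by auto
  have cb: "(\<Sum>j\<in>{1..d}. Re (?Z1 j j)) + (\<Sum>j\<in>{1..d}. tau j * Im (?Z1 j (?n j))) \<le> holevo_objective d rho0 X"
    by (rule classical_bound[OF feas tt])
  have tot: "0 \<le> (\<Sum>j\<in>{1..d}. q j) + 2 * (\<Sum>j\<in>{1..d}. L j) + (\<Sum>j\<in>{1..d}. Gt j)"
  proof -
    have "0 \<le> (\<Sum>j\<in>{1..d}. q j + 2 * L j + Gt j)" by (rule sum_nonneg) (rule per)
    also have "\<dots> = (\<Sum>j\<in>{1..d}. q j) + 2 * (\<Sum>j\<in>{1..d}. L j) + (\<Sum>j\<in>{1..d}. Gt j)"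
      by (simp add: sum.distrib sum_distrib_left)
    finally show ?thesis .
  qed
  have g: "g_alpha D d rho0 drho \<alpha> z xi = - (\<Sum>j\<in>{1..d}. z j j) - (\<Sum>j\<in>{1..d}. Gt j) / 2"
    unfolding g_alpha_def Gt_def Let_def by (simp add: sum_divide_distrib)
  define F where "F = (\<Sum>j\<in>{1..d}. Re (?Z1 j j)) + (\<Sum>j\<in>{1..d}. tau j * Im (?Z1 j (?n j)))"
  define E where "E = (\<Sum>j\<in>{1..d}. z j j)"
  define SG where "SG = (\<Sum>j\<in>{1..d}. Gt j)"
  define SQ where "SQ = (\<Sum>j\<in>{1..d}. q j)"
  define SL where "SL = (\<Sum>j\<in>{1..d}. L j)"
  have g': "g_alpha D d rho0 drho \<alpha> z xi = - E - SG / 2" using g unfolding E_def SG_def .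
  have tot': "0 \<le> SQ + 2 * SL + SG" using tot unfolding SQ_def SL_def SG_def .
  have sumL': "SL = E" using sumL unfolding SL_def E_def .
  have sumq': "SQ = 2 * F" using sumq unfolding SQ_def F_def .
  have cb': "F \<le> holevo_objective d rho0 X" using cb unfolding F_def .
  show ?thesis unfolding g' using tot' sumL' sumq' cb' by linarith
qed

theorem theorem2:
  fixes D d :: nat
    and rho :: "(nat \<Rightarrow> real) \<Rightarrow> complex mat"
    and \<theta>0 :: "nat \<Rightarrow> real"
    and drho :: "nat \<Rightarrow> complex mat"
  assumes d3: "d \<ge> 3"
    and family: "\<exists>\<epsilon>>0. \<forall>\<theta>. (\<forall>j\<in>{1..d}. \<bar>\<theta> j - \<theta>0 j\<bar> < \<epsilon>) \<longrightarrow> density_mat D (rho \<theta>)"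
    and full_rank: "invertible_mat (rho \<theta>0)"
    and drho_carrier: "\<forall>j\<in>{1..d}. drho j \<in> carrier_mat D D"
    and drho_deriv: "\<forall>j\<in>{1..d}. \<forall>a<D. \<forall>b<D.
           ((\<lambda>t::real. rho (\<theta>0(j := \<theta>0 j + t)) $$ (a, b)) has_vector_derivative (drho j $$ (a, b))) (at 0)"
  shows "(SUP \<alpha>. SUP z. SUP xi \<in> {xi. \<forall>k\<in>{1..d}. hermitian_mat D (xi k)}.
            ereal (g_alpha D d (rho \<theta>0) drho \<alpha> z xi))
         \<le> holevo_CR D d (rho \<theta>0) drho"
proof -
  have d: "2 \<le> d" using d3 by simp
  obtain \<epsilon> where \<epsilon>: "\<epsilon> > 0" and fam: "\<forall>\<theta>. (\<forall>j\<in>{1..d}. \<bar>\<theta> j - \<theta>0 j\<bar> < \<epsilon>) \<longrightarrow> density_mat D (rho \<theta>)"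
    using family by blast
  have dens: "density_mat D (rho \<theta>0)" using fam \<epsilon> by auto
  then have psd: "psd_mat D (rho \<theta>0)" unfolding density_mat_def by simp
  then have rho: "rho \<theta>0 \<in> carrier_mat D D" unfolding psd_mat_def hermitian_mat_def by simp
  have R: "minv (rho \<theta>0) \<in> carrier_mat D D \<and> rho \<theta>0 * minv (rho \<theta>0) = 1\<^sub>m D \<and> minv (rho \<theta>0) * rho \<theta>0 = 1\<^sub>m D"
    by (rule minv_invertible[OF rho full_rank])
  show ?thesis
    unfolding holevo_CR_def
  proof (intro SUP_least INF_greatest)
    fix \<alpha> z xi X
    assume xi: "xi \<in> {xi. \<forall>k\<in>{1..d}. hermitian_mat D (xi k)}" and X: "X \<in> {X. holevo_feasible D d (rho \<theta>0) drho X}"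
    have "g_alpha D d (rho \<theta>0) drho \<alpha> z xi \<le> holevo_objective d (rho \<theta>0) X"
      by (rule core[OF d psd _ _ _ drho_carrier]) (use R xi X in auto)
    then show "ereal (g_alpha D d (rho \<theta>0) drho \<alpha> z xi) \<le> ereal (holevo_objective d (rho \<theta>0) X)"
      by simp
  qed
qed

end
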